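(* Let $X\subseteq[U]$ be a set of $k$ keys. Let $p>4U^2$ be a prime and $m\le U$ a positive integer, and let $h(x)=((\sigma x+\tau)\bmod p)\bmod m$ where $\sigma,\tau\in[p]$ are chosen independently and uniformly at random. Fix a key $x\notin X$ and buckets $a,b\in[m]$. Let $y,z\in X$ be chosen independently and uniformly at random (independently of $h$). Then $$\Pr\big(h(y)=h(z)=b \;\big|\; h(x)=a\big)\le \frac{1}{m^2}+O\!\left(\frac{U\log U}{mk^2}\right).$$
   Context: $[N]=\{0,1,\dots,N-1\}$. The probability is over the joint randomness of $\sigma,\tau,y,z$. The $O(\cdot)$ hides an absolute constant. *)

theory Defs
  imports "HOL-Computational_Algebra.Primes" Complex_Main
begin

definition hsh :: "nat \<Rightarrow> nat \<Rightarrow> nat \<Rightarrow> nat \<Rightarrow> nat \<Rightarrow> nat" where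
  "hsh p m \<sigma> \<tau> x = ((\<sigma> * x + \<tau>) mod p) mod m"

text \<open>Sample space: (sigma, tau, y, z) uniform on [p] x [p] x X x X.
  Conditional probability under the uniform distribution on a finite space
  = |A \<inter> B| / |B|.\<close>
definition cond_prob_hash :: "nat \<Rightarrow> nat \<Rightarrow> nat set \<Rightarrow> nat \<Rightarrow> nat \<Rightarrow> nat \<Rightarrow> real" where
  "cond_prob_hash p m X x a b =
     real (card {(\<sigma>, \<tau>, y, z). \<sigma> \<in> {..<p} \<and> \<tau> \<in> {..<p} \<and> y \<in> X \<and> z \<in> X \<and>
                  hsh p m \<sigma> \<tau> x = a \<and> hsh p m \<sigma> \<tau> y = b \<and> hsh p m \<sigma> \<tau> z = b})
     / real (card {(\<sigma>, \<tau>, y, z). \<sigma> \<in> {..<p} \<and> \<tau> \<in> {..<p} \<and> y \<in> X \<and> z \<in> X \<and>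
                  hsh p m \<sigma> \<tau> x = a})"

end

theory Submission
  imports Defs "HOL-Analysis.Harmonic_Numbers"
begin

definition samp :: "int \<Rightarrow> int \<Rightarrow> int \<Rightarrow> int \<Rightarrow> int set" where
  "samp p K lo hi = {l \<in> {lo..hi}. l mod p = K mod p}"

lemma samp_lemma:
  fixes f :: "int \<Rightarrow> real"
  assumes nn: "\<And>l. 0 \<le> f l"
    and qc: "\<And>a b c. a \<le> b \<Longrightarrow> b \<le> c \<Longrightarrow> min (f a) (f c) \<le> f b"
    and bd: "\<And>l. f l \<le> M" and p: "p > 0"
  shows "real_of_int p * (\<Sum>l\<in>samp p K lo hi. f l) \<le> (\<Sum>l\<in>{lo..hi}. f l) + real_of_int p * M"
proof (induction "nat (hi - lo + 1)" arbitrary: lo hi rule: less_induct)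
  case less
  have M0: "0 \<le> M" using nn[of 0] bd[of 0] by linarith
  have fin: "finite (samp p K lo hi)" unfolding samp_def by (rule finite_subset[where B="{lo..hi}"]) auto
  show ?case
  proof (cases "hi < lo")
    case True
    then have "samp p K lo hi = {}" unfolding samp_def by auto
    then show ?thesis using M0 p by (simp add: sum_nonneg nn)
  next
    case False
    show ?thesis
    proof (cases "lo mod p = K mod p")
      case lo_no: False
      have e: "samp p K lo hi = samp p K (lo+1) hi" unfolding samp_def using lo_no by (auto, smt (verit))
      have "real_of_int p * (\<Sum>l\<in>samp p K (lo+1) hi. f l) \<le> (\<Sum>l\<in>{lo+1..hi}. f l) + real_of_int p * M"
        using less[of hi "lo+1"] False by simp
      also have "(\<Sum>l\<in>{lo+1..hi}. f l) \<le> (\<Sum>l\<in>{lo..hi}. f l)"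
        by (rule sum_mono2) (auto simp: nn)
      finally show ?thesis using e by simp
    next
      case lo_s: True
      show ?thesis
      proof (cases "hi mod p = K mod p")
        case hi_no: False
        have e: "samp p K lo hi = samp p K lo (hi - 1)" unfolding samp_def using hi_no by (auto, smt (verit))
        have "real_of_int p * (\<Sum>l\<in>samp p K lo (hi-1). f l) \<le> (\<Sum>l\<in>{lo..hi-1}. f l) + real_of_int p * M"
          using less[of "hi-1" lo] False by simp
        also have "(\<Sum>l\<in>{lo..hi-1}. f l) \<le> (\<Sum>l\<in>{lo..hi}. f l)"
          by (rule sum_mono2) (auto simp: nn)
        finally show ?thesis using e by simp
      next
        case hi_s: True
        show ?thesis
        proof (cases "lo = hi")
          case True
          then have "samp p K lo hi = {lo}" unfolding samp_def using lo_s by auto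
          then have "real_of_int p * (\<Sum>l\<in>samp p K lo hi. f l) \<le> real_of_int p * M"
            using bd p by simp
          moreover have "0 \<le> (\<Sum>l\<in>{lo..hi}. f l)" by (simp add: sum_nonneg nn)
          ultimately show ?thesis by linarith
        next
          case ne: False
          have "(hi - lo) mod p = 0" using lo_s hi_s by (simp add: mod_diff_cong mod_eq_0_iff_dvd mod_eq_dvd_iff)
          then have dv: "p dvd (hi - lo)" by auto
          have gap: "lo + p \<le> hi" using zdvd_imp_le[OF dv] False ne by fastforce
          show ?thesis
          proof (cases "f lo \<le> f hi")
            case True
            have e: "samp p K lo hi = insert lo (samp p K (lo+p) hi)"
            proof -
              have "l \<in> samp p K lo hi \<Longrightarrow> l \<noteq> lo \<Longrightarrow> lo + p \<le> l" for l
              proof -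
                assume a: "l \<in> samp p K lo hi" "l \<noteq> lo"
                then have "l mod p = lo mod p" unfolding samp_def using lo_s by simp
                then have "p dvd (l - lo)" by (simp add: mod_eq_dvd_iff)
                moreover have "l > lo" using a unfolding samp_def by auto
                ultimately show ?thesis using zdvd_imp_le by fastforce
              qed
              then show ?thesis unfolding samp_def using lo_s gap p by auto
            qed
            have nin: "lo \<notin> samp p K (lo+p) hi" unfolding samp_def using p by auto
            have IH: "real_of_int p * (\<Sum>l\<in>samp p K (lo+p) hi. f l) \<le> (\<Sum>l\<in>{lo+p..hi}. f l) + real_of_int p * M"
              using less[of hi "lo+p"] p gap by simp
            have w: "real_of_int p * f lo \<le> (\<Sum>l\<in>{lo..lo+p-1}. f l)"
            proof -
              have "(\<Sum>l\<in>{lo..lo+p-1}. f lo) \<le> (\<Sum>l\<in>{lo..lo+p-1}. f l)"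
              proof (rule sum_mono)
                fix l assume "l \<in> {lo..lo+p-1}"
                then have "min (f lo) (f hi) \<le> f l" using qc[of lo l hi] gap by auto
                then show "f lo \<le> f l" using True by simp
              qed
              moreover have "card {lo..lo+p-1} = nat p" by simp
              ultimately show ?thesis using p by simp
            qed
            have split: "(\<Sum>l\<in>{lo..hi}. f l) = (\<Sum>l\<in>{lo..lo+p-1}. f l) + (\<Sum>l\<in>{lo+p..hi}. f l)"
            proof -
              have "{lo..hi} = {lo..lo+p-1} \<union> {lo+p..hi}" using gap p by auto
              then show ?thesis by (simp add: sum.union_disjoint[symmetric])
            qed
            show ?thesis using e nin IH w split fin by (simp add: algebra_simps)
          next
            case False
            have e: "samp p K lo hi = insert hi (samp p K lo (hi-p))"
            proof -
              have "l \<in> samp p K lo hi \<Longrightarrow> l \<noteq> hi \<Longrightarrow> l \<le> hi - p" for l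
              proof -
                assume a: "l \<in> samp p K lo hi" "l \<noteq> hi"
                then have "hi mod p = l mod p" unfolding samp_def using hi_s by simp
                then have "p dvd (hi - l)" by (simp add: mod_eq_dvd_iff)
                moreover have "l < hi" using a unfolding samp_def by auto
                ultimately show ?thesis using zdvd_imp_le by fastforce
              qed
              then show ?thesis unfolding samp_def using hi_s gap p by auto
            qed
            have nin: "hi \<notin> samp p K lo (hi-p)" unfolding samp_def using p by auto
            have IH: "real_of_int p * (\<Sum>l\<in>samp p K lo (hi-p). f l) \<le> (\<Sum>l\<in>{lo..hi-p}. f l) + real_of_int p * M"
              using less[of "hi-p" lo] p gap by simp
            have w: "real_of_int p * f hi \<le> (\<Sum>l\<in>{hi-p+1..hi}. f l)"
            proof -
              have "(\<Sum>l\<in>{hi-p+1..hi}. f hi) \<le> (\<Sum>l\<in>{hi-p+1..hi}. f l)"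
              proof (rule sum_mono)
                fix l assume "l \<in> {hi-p+1..hi}"
                then have "min (f lo) (f hi) \<le> f l" using qc[of lo l hi] gap by auto
                then show "f hi \<le> f l" using False by simp
              qed
              moreover have "card {hi-p+1..hi} = nat p" by simp
              ultimately show ?thesis using p by simp
            qed
            have split: "(\<Sum>l\<in>{lo..hi}. f l) = (\<Sum>l\<in>{lo..hi-p}. f l) + (\<Sum>l\<in>{hi-p+1..hi}. f l)"
            proof -
              have "{lo..hi} = {lo..hi-p} \<union> {hi-p+1..hi}" using gap p by auto
              then show ?thesis by (simp add: sum.union_disjoint[symmetric])
            qed
            show ?thesis using e nin IH w split fin by (simp add: algebra_simps)
          qed
        qed
      qed
    qed
  qed
qed

definition Dfun :: "int \<Rightarrow> int \<Rightarrow> int \<Rightarrow> int \<Rightarrow> real" where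
  "Dfun r s N l = min (real_of_int (N-1)) ((of_int l + of_int s * of_int (N-1)) / of_int r) - max 0 (of_int l / of_int r)"

definition ffun :: "int \<Rightarrow> int \<Rightarrow> int \<Rightarrow> int \<Rightarrow> real" where
  "ffun r s N l = (if Dfun r s N l \<ge> 0 then Dfun r s N l / of_int s + 1 else 0)"

definition Fb :: "int \<Rightarrow> int \<Rightarrow> int \<Rightarrow> int \<Rightarrow> int set" where
  "Fb r s N l = {v \<in> {0..N-1}. 0 \<le> r* v - l \<and> r* v - l \<le> s * (N-1) \<and> s dvd (r* v - l)}"

lemma Dfun_qc:
  assumes r: "r > 0" and s: "s > 0" and ab: "a \<le> b" and bc: "b \<le> c"
  shows "min (Dfun r s N a) (Dfun r s N c) \<le> Dfun r s N b"
proof -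
  define L where "L l = real_of_int l / of_int r" for l
  define U where "U l = (real_of_int l + of_int s * of_int (N-1)) / of_int r" for l
  have rr: "real_of_int r > 0" using r by simp
  have La: "L a \<le> L b" "L b \<le> L c" unfolding L_def using ab bc rr by (simp_all add: divide_right_mono)
  have Ua: "U a \<le> U b" "U b \<le> U c" unfolding U_def using ab bc rr by (simp_all add: divide_right_mono)
  have UL: "U l - L l = of_int s * of_int (N-1) / of_int r" for l
    unfolding U_def L_def by (simp add: diff_divide_distrib[symmetric])
  have D: "Dfun r s N l = min (real_of_int (N-1)) (U l) - max 0 (L l)" for l
    unfolding Dfun_def U_def L_def by simp
  show ?thesis unfolding D using La Ua UL[of a] UL[of b]
    by (simp add: min_def max_def split: if_splits) linarith?
qed

lemma ffun_qc:
  assumes r: "r > 0" and s: "s > 0" and ab: "a \<le> b" and bc: "b \<le> c"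
  shows "min (ffun r s N a) (ffun r s N c) \<le> ffun r s N b"
proof -
  have q: "min (Dfun r s N a) (Dfun r s N c) \<le> Dfun r s N b" by (rule Dfun_qc[OF r s ab bc])
  have ss: "real_of_int s > 0" using s by simp
  show ?thesis
  proof (cases "Dfun r s N a \<ge> 0 \<and> Dfun r s N c \<ge> 0")
    case True
    then have "Dfun r s N b \<ge> 0" using q by linarith
    moreover have "min (Dfun r s N a / of_int s + 1) (Dfun r s N c / of_int s + 1) \<le> Dfun r s N b / of_int s + 1"
    proof -
      have "min (Dfun r s N a) (Dfun r s N c) / of_int s \<le> Dfun r s N b / of_int s"
        using q ss by (simp add: divide_right_mono)
      then show ?thesis by (cases "Dfun r s N a \<le> Dfun r s N c") (simp_all add: min_def)
    qed
    ultimately show ?thesis using True unfolding ffun_def by simp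
  next
    case False
    have "ffun r s N b \<ge> 0" unfolding ffun_def using ss by simp
    then show ?thesis using False unfolding ffun_def by auto
  qed
qed

lemma ffun_nonneg: "s > 0 \<Longrightarrow> ffun r s N l \<ge> 0"
  unfolding ffun_def by simp

lemma ffun_le: assumes "r > 0" "s > 0" "N \<ge> 1" shows "ffun r s N l \<le> real_of_int (N-1) / of_int s + 1"
proof -
  have "Dfun r s N l \<le> real_of_int (N-1)" unfolding Dfun_def by linarith
  then have a: "Dfun r s N l / of_int s \<le> real_of_int (N-1) / of_int s" using assms by (simp add: divide_right_mono)
  have b: "0 \<le> real_of_int (N-1) / of_int s" using assms by simp
  show ?thesis unfolding ffun_def using a b by simp
qed

lemma Fb_mem_real:
  assumes r: "r > 0" and v: "v \<in> Fb r s N l"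
  shows "max 0 (of_int l / of_int r) \<le> real_of_int v \<and>
         real_of_int v \<le> min (real_of_int (N-1)) ((of_int l + of_int s * of_int (N-1)) / of_int r)"
proof -
  have rr: "real_of_int r > 0" using r by simp
  from v have v0: "0 \<le> v" "v \<le> N-1" "l \<le> r* v" "r* v \<le> l + s * (N-1)" unfolding Fb_def by auto
  have "of_int l \<le> of_int r * real_of_int v" using v0(3) by (metis of_int_le_iff of_int_mult)
  then have a: "of_int l / of_int r \<le> real_of_int v" using rr by (simp add: divide_le_eq mult.commute)
  have "of_int r * real_of_int v \<le> of_int l + of_int s * of_int (N-1)" using v0(4)
    by (metis of_int_add of_int_le_iff of_int_mult)
  then have b: "real_of_int v \<le> (of_int l + of_int s * of_int (N-1)) / of_int r" using rr by (simp add: le_divide_eq mult.commute)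
  show ?thesis using a b v0(1,2) by auto
qed

lemma card_Fb_le:
  assumes r: "r > 0" and s: "s > 0" and cop: "coprime r s"
  shows "real (card (Fb r s N l)) \<le> ffun r s N l"
proof (cases "Fb r s N l = {}")
  case True
  then show ?thesis using ffun_nonneg[OF s] by simp
next
  case False
  let ?F = "Fb r s N l"
  have fin: "finite ?F" unfolding Fb_def by (rule finite_subset[where B="{0..N-1}"]) auto
  define v0 where "v0 = Min ?F"
  define v1 where "v1 = Max ?F"
  have v0F: "v0 \<in> ?F" unfolding v0_def using fin False by simp
  have v1F: "v1 \<in> ?F" unfolding v1_def using fin False by simp
  have v0le: "v0 \<le> v" if "v \<in> ?F" for v unfolding v0_def using fin that by simp
  have v1ge: "v \<le> v1" if "v \<in> ?F" for v unfolding v1_def using fin that by simp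
  have dv: "s dvd (v - v0)" if "v \<in> ?F" for v
  proof -
    have h1: "s dvd r* v - l" using that unfolding Fb_def by auto
    have h2: "s dvd r* v0 - l" using v0F unfolding Fb_def by auto
    have "s dvd (r* v - l) - (r* v0 - l)" using h1 h2 by (rule dvd_diff)
    then have "s dvd r * (v - v0)" by (simp add: algebra_simps)
    moreover have "coprime s r" using cop by (simp add: coprime_commute)
    ultimately show ?thesis by (simp add: coprime_dvd_mult_right_iff)
  qed
  define \<phi> where "\<phi> v = (v - v0) div s" for v
  have inj: "inj_on \<phi> ?F"
  proof (rule inj_onI)
    fix v w assume "v \<in> ?F" "w \<in> ?F" "\<phi> v = \<phi> w"
    then show "v = w" unfolding \<phi>_def using dv
      by (metis diff_add_cancel dvd_div_mult_self)
  qed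
  have img: "\<phi> ` ?F \<subseteq> {0..(v1 - v0) div s}"
  proof
    fix t assume "t \<in> \<phi> ` ?F"
    then obtain v where v: "v \<in> ?F" "t = (v - v0) div s" unfolding \<phi>_def by auto
    have "0 \<le> v - v0" "v - v0 \<le> v1 - v0" using v0le[OF v(1)] v1ge[OF v(1)] by auto
    then show "t \<in> {0..(v1 - v0) div s}" using v(2) s by (simp add: zdiv_mono1 pos_imp_zdiv_nonneg_iff)
  qed
  have "card ?F = card (\<phi> ` ?F)" using card_image[OF inj] by simp
  also have "\<dots> \<le> card {0..(v1 - v0) div s}" by (rule card_mono) (use img in auto)
  finally have c1: "card ?F \<le> nat ((v1 - v0) div s + 1)" by simp
  have "v0 \<le> v1" using v0le v1F by simp
  then have q0: "(v1 - v0) div s \<ge> 0" using s by (simp add: pos_imp_zdiv_nonneg_iff)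
  have "real (card ?F) \<le> real (nat ((v1 - v0) div s + 1))" using c1 by linarith
  also have "\<dots> = real_of_int ((v1 - v0) div s) + 1" using q0 by simp
  finally have c2: "real (card ?F) \<le> real_of_int ((v1 - v0) div s) + 1" .
  have c3: "real_of_int ((v1 - v0) div s) \<le> real_of_int (v1 - v0) / of_int s"
    using s by (metis floor_divide_of_int_eq of_int_floor_le)
  have m0: "max 0 (of_int l / of_int r) \<le> real_of_int v0" using Fb_mem_real[OF r v0F] by simp
  have m1: "real_of_int v1 \<le> min (real_of_int (N-1)) ((of_int l + of_int s * of_int (N-1)) / of_int r)"
    using Fb_mem_real[OF r v1F] by simp
  have eqd: "real_of_int (v1 - v0) = real_of_int v1 - real_of_int v0" by simp
  have Dge: "real_of_int (v1 - v0) \<le> Dfun r s N l" unfolding Dfun_def eqd using m0 m1 by linarith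
  have "real_of_int (v1 - v0) / of_int s \<le> Dfun r s N l / of_int s" using Dge s by (simp add: divide_right_mono)
  moreover have "Dfun r s N l \<ge> 0" using Dge \<open>v0 \<le> v1\<close> by linarith
  ultimately show ?thesis unfolding ffun_def using c2 c3 by simp
qed

lemma card_Fb_ge:
  assumes r: "r > 0" and s: "s > 0" and cop: "coprime r s"
  shows "ffun r s N l \<le> real (card (Fb r s N l)) + 2"
proof (cases "Dfun r s N l \<ge> 0")
  case False
  then show ?thesis unfolding ffun_def by simp
next
  case True
  have rr: "real_of_int r > 0" and ss: "real_of_int s > 0" using r s by auto
  obtain u w where uw: "u * r + w * s = 1" using bezout_int[of r s] cop by auto
  define \<rho> where "\<rho> = u * l"
  have rho: "s dvd r * \<rho> - l"
  proof -
    have "r * \<rho> - l = (u * r - 1) * l" unfolding \<rho>_def by (simp add: algebra_simps)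
    also have "u * r - 1 = -(w * s)" using uw by linarith
    finally have "r * \<rho> - l = s * (- w * l)" by (simp add: algebra_simps)
    then show ?thesis by simp
  qed
  define \<alpha> where "\<alpha> = max 0 (of_int l / of_int r :: real)"
  define \<beta> where "\<beta> = min (real_of_int (N-1)) ((of_int l + of_int s * of_int (N-1)) / of_int r)"
  have D: "Dfun r s N l = \<beta> - \<alpha>" unfolding Dfun_def \<alpha>_def \<beta>_def by simp
  define c1 where "c1 = \<lceil>(\<alpha> - of_int \<rho>) / of_int s\<rceil>"
  define c2 where "c2 = \<lfloor>(\<beta> - of_int \<rho>) / of_int s\<rfloor>"
  have sub: "(\<lambda>t. \<rho> + s * t) ` {c1..c2} \<subseteq> Fb r s N l"
  proof
    fix v assume "v \<in> (\<lambda>t. \<rho> + s * t) ` {c1..c2}"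
    then obtain t where t: "c1 \<le> t" "t \<le> c2" "v = \<rho> + s * t" by auto
    have "(\<alpha> - of_int \<rho>) / of_int s \<le> of_int t" using t(1) unfolding c1_def by (simp add: ceiling_le_iff)
    then have "\<alpha> - of_int \<rho> \<le> of_int s * of_int t" using ss by (simp add: divide_le_eq mult.commute)
    then have va: "\<alpha> \<le> real_of_int v" using t(3) by simp
    have "of_int t \<le> (\<beta> - of_int \<rho>) / of_int s" using t(2) unfolding c2_def by (simp add: le_floor_iff)
    then have "of_int s * of_int t \<le> \<beta> - of_int \<rho>" using ss by (simp add: le_divide_eq mult.commute)
    then have vb: "real_of_int v \<le> \<beta>" using t(3) by simp
    have v0: "0 \<le> v" using va unfolding \<alpha>_def by simp
    have v1: "v \<le> N - 1" using vb unfolding \<beta>_def by simp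
    have "of_int l / of_int r \<le> real_of_int v" using va unfolding \<alpha>_def by simp
    then have "of_int l \<le> real_of_int v * of_int r" using rr by (simp add: divide_le_eq)
    then have "real_of_int l \<le> real_of_int (v * r)" by simp
    then have "l \<le> v * r" by (simp only: of_int_le_iff)
    then have v2: "0 \<le> r * v - l" by (simp add: mult.commute)
    have "real_of_int v \<le> (of_int l + of_int s * of_int (N-1)) / of_int r" using vb unfolding \<beta>_def by simp
    then have "real_of_int v * of_int r \<le> of_int l + of_int s * of_int (N-1)" using rr by (simp add: le_divide_eq)
    then have "real_of_int (v * r) \<le> real_of_int (l + s * (N-1))" by simp
    then have "v * r \<le> l + s * (N-1)" by (simp only: of_int_le_iff)
    then have v3: "r * v - l \<le> s * (N - 1)" by (simp add: mult.commute)
    have v4: "s dvd r * v - l"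
    proof -
      have "r * v - l = (r * \<rho> - l) + s * (r * t)" using t(3) by (simp add: algebra_simps)
      moreover have "s dvd (r * \<rho> - l) + s * (r * t)" using rho by (intro dvd_add) auto
      ultimately show ?thesis by metis
    qed
    show "v \<in> Fb r s N l" unfolding Fb_def using v0 v1 v2 v3 v4 by auto
  qed
  have inj: "inj_on (\<lambda>t. \<rho> + s * t) {c1..c2}" using s by (auto intro: inj_onI)
  have fin: "finite (Fb r s N l)" unfolding Fb_def by (rule finite_subset[where B="{0..N-1}"]) auto
  have "card {c1..c2} \<le> card (Fb r s N l)"
    using card_mono[OF fin sub] card_image[OF inj] by simp
  then have cc: "real_of_int (c2 - c1 + 1) \<le> real (card (Fb r s N l))"
  proof (cases "c2 - c1 + 1 \<ge> 0")
    case True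
    assume h: "card {c1..c2} \<le> card (Fb r s N l)"
    have "real (card {c1..c2}) = real_of_int (c2 - c1 + 1)" using True by simp
    then show ?thesis using h by (metis of_nat_le_iff)
  next
    case False
    then show ?thesis by simp
  qed
  have "c1 < (\<alpha> - of_int \<rho>) / of_int s + 1" unfolding c1_def by linarith
  moreover have "c2 > (\<beta> - of_int \<rho>) / of_int s - 1" unfolding c2_def by linarith
  ultimately have "real_of_int (c2 - c1 + 1) \<ge> (\<beta> - \<alpha>) / of_int s - 1"
    by (simp add: diff_divide_distrib)
  then have "Dfun r s N l / of_int s + 1 \<le> real (card (Fb r s N l)) + 2" using cc unfolding D by linarith
  then show ?thesis unfolding ffun_def using True by simp
qed

definition cnt :: "int \<Rightarrow> int \<Rightarrow> int \<Rightarrow> int \<Rightarrow> int \<Rightarrow> nat" where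
  "cnt r s N p K = card {(v,w). v \<in> {0..N-1} \<and> w \<in> {0..N-1} \<and> (r* v - s * w) mod p = K mod p}"

lemma fiber_card:
  assumes s: "s > 0"
  shows "card {x \<in> {0..N-1} \<times> {0..N-1}. (\<lambda>(v,w). r* v - s * w) x = l} = card (Fb r s N l)"
proof -
  let ?S = "{x \<in> {0..N-1} \<times> {0..N-1}. (\<lambda>(v,w). r* v - s * w) x = l}"
  have inj: "inj_on fst ?S"
  proof (rule inj_onI)
    fix x y assume "x \<in> ?S" "y \<in> ?S" "fst x = fst y"
    then show "x = y" using s by (cases x, cases y) auto
  qed
  have img: "fst ` ?S = Fb r s N l"
  proof
    show "fst ` ?S \<subseteq> Fb r s N l"
    proof
      fix v assume "v \<in> fst ` ?S"
      then obtain x where x: "x \<in> ?S" "v = fst x" by auto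
      then obtain w where vw: "(v,w) \<in> ?S" by (cases x) auto
      then have h: "r* v - l = s * w" "0 \<le> w" "w \<le> N-1" "0 \<le> v" "v \<le> N-1" by auto
      have "0 \<le> s * w" using s h by simp
      moreover have "s * w \<le> s * (N-1)" using s h by (intro mult_left_mono) auto
      ultimately show "v \<in> Fb r s N l" unfolding Fb_def using h by auto
    qed
    show "Fb r s N l \<subseteq> fst ` ?S"
    proof
      fix v assume v: "v \<in> Fb r s N l"
      define w where "w = (r* v - l) div s"
      have e: "r* v - l = s * w" unfolding w_def using v unfolding Fb_def by auto
      have "0 \<le> s * w" "s * w \<le> s * (N-1)" using v e unfolding Fb_def by auto
      then have "0 \<le> w" "w \<le> N-1" using s by (auto simp: zero_le_mult_iff)
      then have "(v,w) \<in> ?S" using v e unfolding Fb_def by auto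
      then show "v \<in> fst ` ?S" by force
    qed
  qed
  show ?thesis using card_image[OF inj] img by simp
qed

lemma cnt_core:
  assumes r: "r > 0" and s: "s > 0" and cop: "coprime r s" and p: "p > 0" and N: "N \<ge> 1"
  shows "real (cnt r s N p K) \<le> (real_of_int (N * N) + 2 * (real_of_int ((r+s) * (N-1)) + 1)) / of_int p
            + real_of_int (N-1) / of_int s + 1"
proof -
  define box where "box = {0..N-1} \<times> {0..N-1::int}"
  define g where "g = (\<lambda>(v,w). r* v - s * w)"
  define lo where "lo = -(s * (N-1))"
  define hi where "hi = r * (N-1)"
  define S where "S = {x \<in> box. g x mod p = K mod p}"
  define M where "M = real_of_int (N-1) / of_int s + 1"
  have finbox: "finite box" unfolding box_def by simp
  have finS: "finite S" unfolding S_def using finbox by simp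
  have cS: "cnt r s N p K = card S" unfolding cnt_def S_def box_def g_def
    by (rule arg_cong[where f=card]) auto
  have range: "g x \<in> {lo..hi}" if "x \<in> box" for x
  proof -
    obtain v w where xx: "x = (v,w)" by (cases x)
    then have x: "x = (v,w)" "0 \<le> v" "v \<le> N-1" "0 \<le> w" "w \<le> N-1" using that unfolding box_def by auto
    have "r* v \<le> r * (N-1)" "s * w \<le> s * (N-1)" "0 \<le> r* v" "0 \<le> s * w" using x r s by (auto intro: mult_left_mono)
    then show ?thesis unfolding g_def lo_def hi_def x by auto
  qed
  have gS: "g ` S \<subseteq> samp p K lo hi" unfolding S_def samp_def using range by auto
  have fsamp: "finite (samp p K lo hi)" unfolding samp_def by (rule finite_subset[where B="{lo..hi}"]) auto
  have "card S = (\<Sum>l\<in>samp p K lo hi. card {x \<in> S. g x = l})"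
    using sum.group[OF finS fsamp gS, of "\<lambda>_. 1::nat"] by simp
  also have "\<dots> = (\<Sum>l\<in>samp p K lo hi. card (Fb r s N l))"
  proof (rule sum.cong[OF refl])
    fix l assume l: "l \<in> samp p K lo hi"
    have "{x \<in> S. g x = l} = {x \<in> {0..N-1} \<times> {0..N-1}. (\<lambda>(v,w). r* v - s * w) x = l}"
      using l unfolding S_def samp_def box_def g_def by auto
    then show "card {x \<in> S. g x = l} = card (Fb r s N l)" using fiber_card[OF s] by simp
  qed
  finally have c1: "real (card S) = (\<Sum>l\<in>samp p K lo hi. real (card (Fb r s N l)))" by simp
  have "(\<Sum>l\<in>samp p K lo hi. real (card (Fb r s N l))) \<le> (\<Sum>l\<in>samp p K lo hi. ffun r s N l)"
    by (rule sum_mono) (rule card_Fb_le[OF r s cop])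
  moreover have "real_of_int p * (\<Sum>l\<in>samp p K lo hi. ffun r s N l) \<le> (\<Sum>l\<in>{lo..hi}. ffun r s N l) + real_of_int p * M"
    unfolding M_def
    by (rule samp_lemma[OF ffun_nonneg[OF s] ffun_qc[OF r s] ffun_le[OF r s N] p])
  moreover have "(\<Sum>l\<in>{lo..hi}. ffun r s N l) \<le> (\<Sum>l\<in>{lo..hi}. real (card (Fb r s N l)) + 2)"
    by (rule sum_mono) (rule card_Fb_ge[OF r s cop])
  moreover have "(\<Sum>l\<in>{lo..hi}. real (card (Fb r s N l))) = real_of_int (N * N)"
  proof -
    have "box = {x \<in> box. True}" by simp
    have "card box = (\<Sum>l\<in>{lo..hi}. card {x \<in> box. g x = l})"
    proof -
      have gb: "g ` box \<subseteq> {lo..hi}" using range by blast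
      show ?thesis using sum.group[OF finbox _ gb, of "\<lambda>_. 1::nat"] by simp
    qed
    also have "\<dots> = (\<Sum>l\<in>{lo..hi}. card (Fb r s N l))"
      by (rule sum.cong[OF refl]) (simp add: fiber_card[OF s, symmetric] box_def g_def)
    finally have "card box = (\<Sum>l\<in>{lo..hi}. card (Fb r s N l))" .
    moreover have "card box = nat N * nat N" unfolding box_def by (simp add: card_cartesian_product)
    ultimately have "(\<Sum>l\<in>{lo..hi}. card (Fb r s N l)) = nat N * nat N" by simp
    then have "real (\<Sum>l\<in>{lo..hi}. card (Fb r s N l)) = real (nat N * nat N)" by simp
    then show ?thesis using N by simp
  qed
  moreover have "card {lo..hi} = nat ((r+s) * (N-1) + 1)" unfolding lo_def hi_def by (simp add: algebra_simps)
  moreover have "(r+s) * (N-1) + 1 \<ge> 0" using r s N by simp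
  ultimately have "real_of_int p * real (card S) \<le> real_of_int (N * N) + 2 * (real_of_int ((r+s) * (N-1)) + 1) + real_of_int p * M"
    using c1 p by (simp add: sum.distrib) (smt (verit) mult_left_mono of_int_pos)
  then have "real (card S) \<le> (real_of_int (N * N) + 2 * (real_of_int ((r+s) * (N-1)) + 1)) / of_int p + M"
    using p by (simp add: field_simps)
  then show ?thesis unfolding cS M_def by simp
qed

lemma cnt_abs:
  assumes p: "p > 0"
  shows "\<exists>K'. cnt r s N p K \<le> cnt \<bar>r\<bar> \<bar>s\<bar> N p K'"
proof -
  define cr where "cr = (if r < 0 then r * (N-1) else 0)"
  define cs where "cs = (if s < 0 then s * (N-1) else 0)"
  define fv where "fv v = (if r < 0 then N-1-v else v)" for v :: int
  define fw where "fw w = (if s < 0 then N-1-w else w)" for w :: int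
  define K' where "K' = K - cr + cs"
  let ?A = "{(v,w). v \<in> {0..N-1} \<and> w \<in> {0..N-1} \<and> (r* v - s * w) mod p = K mod p}"
  let ?B = "{(v,w). v \<in> {0..N-1} \<and> w \<in> {0..N-1} \<and> (\<bar>r\<bar>* v - \<bar>s\<bar> * w) mod p = K' mod p}"
  define F where "F = (\<lambda>(v,w). (fv v, fw w))"
  have inj: "inj_on F ?A" unfolding F_def fv_def fw_def by (rule inj_onI) (auto split: if_splits)
  have key: "\<bar>r\<bar> * fv v - \<bar>s\<bar> * fw w = (r* v - s * w) - cr + cs" for v w
    unfolding fv_def fw_def cr_def cs_def by (auto simp: algebra_simps abs_if)
  have img: "F ` ?A \<subseteq> ?B"
  proof
    fix y assume "y \<in> F ` ?A"
    then obtain v w where vw: "(v,w) \<in> ?A" "y = (fv v, fw w)" unfolding F_def by auto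
    have "fv v \<in> {0..N-1}" "fw w \<in> {0..N-1}" using vw unfolding fv_def fw_def by auto
    moreover have "(\<bar>r\<bar> * fv v - \<bar>s\<bar> * fw w) mod p = K' mod p"
    proof -
      have "(r* v - s * w) mod p = K mod p" using vw by auto
      then have "((r* v - s * w) + (cs - cr)) mod p = (K + (cs - cr)) mod p" by (rule mod_add_cong) simp
      then show ?thesis unfolding key K'_def by (simp add: algebra_simps)
    qed
    ultimately show "y \<in> ?B" using vw by auto
  qed
  have "card ?A \<le> card ?B"
    by (rule card_inj_on_le[OF inj img]) (rule finite_subset[where B="{0..N-1} \<times> {0..N-1}"], auto)
  then show ?thesis unfolding cnt_def by blast
qed

lemma cnt_swap:
  shows "cnt r s N p K \<le> cnt s r N p (-K)"
proof -
  let ?A = "{(v,w). v \<in> {0..N-1} \<and> w \<in> {0..N-1} \<and> (r* v - s * w) mod p = K mod p}"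
  let ?B = "{(v,w). v \<in> {0..N-1} \<and> w \<in> {0..N-1} \<and> (s* v - r * w) mod p = (-K) mod p}"
  have inj: "inj_on prod.swap ?A" by (rule inj_onI) auto
  have img: "prod.swap ` ?A \<subseteq> ?B"
  proof
    fix y assume "y \<in> prod.swap ` ?A"
    then obtain v w where vw: "(v,w) \<in> ?A" "y = (w, v)" by auto
    have "(r* v - s * w) mod p = K mod p" using vw by auto
    then have "(- (r* v - s * w)) mod p = (-K) mod p" by (rule mod_minus_cong)
    then show "y \<in> ?B" using vw by (auto simp: algebra_simps)
  qed
  have "card ?A \<le> card ?B"
    by (rule card_inj_on_le[OF inj img]) (rule finite_subset[where B="{0..N-1} \<times> {0..N-1}"], auto)
  then show ?thesis unfolding cnt_def .
qed

lemma cnt_gen: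
  assumes r: "r \<noteq> 0" and s: "s \<noteq> 0" and cop: "coprime r s" and p: "p > 0" and N: "N \<ge> 1"
  shows "real (cnt r s N p K) \<le> (real_of_int (N * N) + 2 * (real_of_int ((\<bar>r\<bar>+\<bar>s\<bar>) * (N-1)) + 1)) / of_int p
            + real_of_int (N-1) / of_int (max \<bar>r\<bar> \<bar>s\<bar>) + 1"
proof -
  obtain K' where K': "cnt r s N p K \<le> cnt \<bar>r\<bar> \<bar>s\<bar> N p K'" using cnt_abs[OF p] by blast
  have ra: "\<bar>r\<bar> > 0" and sa: "\<bar>s\<bar> > 0" using r s by auto
  have copa: "coprime \<bar>r\<bar> \<bar>s\<bar>" using cop by (simp add: coprime_iff_gcd_eq_1)
  show ?thesis
  proof (cases "\<bar>r\<bar> \<le> \<bar>s\<bar>")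
    case True
    have "real (cnt \<bar>r\<bar> \<bar>s\<bar> N p K') \<le> (real_of_int (N * N) + 2 * (real_of_int ((\<bar>r\<bar>+\<bar>s\<bar>) * (N-1)) + 1)) / of_int p
            + real_of_int (N-1) / of_int \<bar>s\<bar> + 1" by (rule cnt_core[OF ra sa copa p N])
    moreover have "max \<bar>r\<bar> \<bar>s\<bar> = \<bar>s\<bar>" using True by simp
    ultimately show ?thesis using K' by (smt (verit) of_nat_le_iff)
  next
    case False
    have "cnt \<bar>r\<bar> \<bar>s\<bar> N p K' \<le> cnt \<bar>s\<bar> \<bar>r\<bar> N p (-K')" by (rule cnt_swap)
    moreover have "real (cnt \<bar>s\<bar> \<bar>r\<bar> N p (-K')) \<le> (real_of_int (N * N) + 2 * (real_of_int ((\<bar>s\<bar>+\<bar>r\<bar>) * (N-1)) + 1)) / of_int p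
            + real_of_int (N-1) / of_int \<bar>r\<bar> + 1" by (rule cnt_core[OF sa ra _ p N]) (use cop in \<open>simp add: coprime_iff_gcd_eq_1 gcd.commute\<close>)
    moreover have "max \<bar>r\<bar> \<bar>s\<bar> = \<bar>r\<bar>" using False by simp
    ultimately show ?thesis using K' by (simp add: add.commute)
  qed
qed

lemma sum_inv_max:
  "(\<Sum>a\<in>{1..M}. \<Sum>b\<in>{1..M}. 1 / real (max a b)) \<le> 2 * real (M::nat)"
proof (induction M)
  case 0
  then show ?case by simp
next
  case (Suc M)
  have e1: "(\<Sum>b\<in>{1..Suc M}. 1 / real (max a b)) = (\<Sum>b\<in>{1..M}. 1 / real (max a b)) + 1 / real (Suc M)"
    if "a \<in> {1..M}" for a using that by (simp add: max_def)
  have e2: "(\<Sum>b\<in>{1..Suc M}. 1 / real (max (Suc M) b)) = 1"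
  proof -
    have "(\<Sum>b\<in>{1..Suc M}. 1 / real (max (Suc M) b)) = (\<Sum>b\<in>{1..Suc M}. 1 / real (Suc M))"
      by (rule sum.cong) (auto simp: max_def)
    then show ?thesis by (simp add: field_simps)
  qed
  have "(\<Sum>a\<in>{1..Suc M}. \<Sum>b\<in>{1..Suc M}. 1 / real (max a b))
      = (\<Sum>a\<in>{1..M}. \<Sum>b\<in>{1..Suc M}. 1 / real (max a b)) + (\<Sum>b\<in>{1..Suc M}. 1 / real (max (Suc M) b))"
    using sum.cl_ivl_Suc[of "\<lambda>a. \<Sum>b\<in>{1..Suc M}. 1 / real (max a b)" 1 M] by simp
  also have "(\<Sum>a\<in>{1..M}. \<Sum>b\<in>{1..Suc M}. 1 / real (max a b))
      = (\<Sum>a\<in>{1..M}. (\<Sum>b\<in>{1..M}. 1 / real (max a b)) + 1 / real (Suc M))"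
    by (rule sum.cong[OF refl]) (rule e1)
  also have "\<dots> = (\<Sum>a\<in>{1..M}. \<Sum>b\<in>{1..M}. 1 / real (max a b)) + real M / real (Suc M)"
    by (simp add: sum.distrib)
  also have "real M / real (Suc M) \<le> 1" by simp
  also note e2
  finally show ?case using Suc.IH by simp
qed

lemma mult_image: "g > 0 \<Longrightarrow> {a \<in> {1..n}. g dvd a} = (\<lambda>t. g * t) ` {1..n div (g::nat)}"
proof (safe)
  fix a assume g: "g > 0" and a: "a \<in> {1..n}" "g dvd a"
  then obtain t where t: "a = g * t" by blast
  then have "t \<ge> 1" using a by (cases t) auto
  moreover have "t \<le> n div g" using a t g by (metis atLeastAtMost_iff div_le_mono nonzero_mult_div_cancel_left not_gr0)
  ultimately show "a \<in> (\<lambda>t. g * t) ` {1..n div g}" using t by auto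
next
  fix t assume g: "g > 0" and t: "t \<in> {1..n div g}"
  then show "g * t \<in> {1..n}" using g by (auto simp: less_eq_div_iff_mult_less_eq mult.commute)
qed auto

lemma sum_gcd_max:
  "(\<Sum>a\<in>{1..n}. \<Sum>b\<in>{1..n}. real (gcd a b) / real (max a b)) \<le> 2 * real (n::nat) * harm n"
proof -
  define h where "h g a b = (if g dvd a \<and> g dvd b then real g / real (max a b) else 0)" for g a b :: nat
  have step1: "real (gcd a b) / real (max a b) \<le> (\<Sum>g\<in>{1..n}. h g a b)" if "a \<in> {1..n}" "b \<in> {1..n}" for a b
  proof -
    have g1: "gcd a b \<le> a" using that by (simp add: gcd_le1_nat)
    have g2: "gcd a b \<ge> 1" using that by (simp add: Suc_le_eq)
    have gin: "gcd a b \<in> {1..n}" using g1 g2 that by (simp only: atLeastAtMost_iff) (meson le_trans)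
    have "h (gcd a b) a b = real (gcd a b) / real (max a b)" unfolding h_def by simp
    moreover have "h (gcd a b) a b \<le> (\<Sum>g\<in>{1..n}. h g a b)"
      by (rule member_le_sum[OF gin]) (auto simp: h_def)
    ultimately show ?thesis by simp
  qed
  have "(\<Sum>a\<in>{1..n}. \<Sum>b\<in>{1..n}. real (gcd a b) / real (max a b)) \<le> (\<Sum>a\<in>{1..n}. \<Sum>b\<in>{1..n}. \<Sum>g\<in>{1..n}. h g a b)"
    by (intro sum_mono step1) auto
  also have "\<dots> = (\<Sum>a\<in>{1..n}. \<Sum>g\<in>{1..n}. \<Sum>b\<in>{1..n}. h g a b)"
    by (rule sum.cong[OF refl]) (rule sum.swap)
  also have "\<dots> = (\<Sum>g\<in>{1..n}. \<Sum>a\<in>{1..n}. \<Sum>b\<in>{1..n}. h g a b)"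
    by (rule sum.swap)
  also have "\<dots> \<le> (\<Sum>g\<in>{1..n}. 2 * real n / real g)"
  proof (rule sum_mono)
    fix g assume g: "g \<in> {1..n}"
    have gp: "g > 0" using g by auto
    have "(\<Sum>a\<in>{1..n}. \<Sum>b\<in>{1..n}. h g a b) = (\<Sum>a\<in>{1..n}. if g dvd a then (\<Sum>b\<in>{b \<in> {1..n}. g dvd b}. real g / real (max a b)) else 0)"
      by (rule sum.cong[OF refl], subst sum.inter_filter) (auto simp: h_def)
    also have "\<dots> = (\<Sum>a\<in>{a \<in> {1..n}. g dvd a}. \<Sum>b\<in>{b \<in> {1..n}. g dvd b}. real g / real (max a b))"
      by (subst sum.inter_filter) auto
    also have "\<dots> = (\<Sum>a\<in>{1..n div g}. \<Sum>b\<in>{1..n div g}. real g / real (max (g * a) (g * b)))"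
      unfolding mult_image[OF gp] by (simp add: sum.reindex inj_on_def gp)
    also have "\<dots> = (\<Sum>a\<in>{1..n div g}. \<Sum>b\<in>{1..n div g}. 1 / real (max a b))"
    proof (intro sum.cong refl)
      fix a b
      have "max (g * a) (g * b) = g * max a b" by (simp add: max_def)
      then show "real g / real (max (g * a) (g * b)) = 1 / real (max a b)" using gp by simp
    qed
    also have "\<dots> \<le> 2 * real (n div g)" by (rule sum_inv_max)
    also have "real (n div g) \<le> real n / real g" by (rule of_nat_div_le_of_nat)
    finally show "(\<Sum>a\<in>{1..n}. \<Sum>b\<in>{1..n}. h g a b) \<le> 2 * real n / real g" by simp
  qed
  also have "\<dots> = 2 * real n * harm n"
    unfolding harm_def by (simp add: sum_distrib_left divide_inverse)
  finally show ?thesis .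
qed

lemma harm_le_ln: "n > 0 \<Longrightarrow> harm n \<le> 1 + ln (real n)"
  using euler_mascheroni_sequence_decreasing[of 1 n] by (simp add: harm_def)

lemma two_to_one:
  fixes \<phi> :: "nat \<Rightarrow> real"
  assumes nn: "\<And>a. \<phi> a \<ge> 0" and Y: "Y \<subseteq> {..<U}" "x \<notin> Y" and x: "x < U"
  shows "(\<Sum>y\<in>Y. \<phi> (nat \<bar>int y - int x\<bar>)) \<le> 2 * (\<Sum>a\<in>{1..U-1}. \<phi> a)"
proof -
  have fY: "finite Y" using Y finite_subset by blast
  let ?Y1 = "{y \<in> Y. y < x}" and ?Y2 = "{y \<in> Y. x < y}"
  have yU: "\<forall>y\<in>Y. y < U" using Y by auto
  have Yeq: "Y = ?Y1 \<union> ?Y2"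
  proof (rule set_eqI)
    fix y
    show "y \<in> Y \<longleftrightarrow> y \<in> ?Y1 \<union> ?Y2"
    proof (cases "y = x")
      case True then show ?thesis using Y(2) by auto
    next
      case False then show ?thesis by auto
    qed
  qed
  have "(\<Sum>y\<in>Y. \<phi> (nat \<bar>int y - int x\<bar>)) = (\<Sum>y\<in>?Y1. \<phi> (nat \<bar>int y - int x\<bar>)) + (\<Sum>y\<in>?Y2. \<phi> (nat \<bar>int y - int x\<bar>))"
    by (subst Yeq, rule sum.union_disjoint) (use fY in auto)
  also have "(\<Sum>y\<in>?Y1. \<phi> (nat \<bar>int y - int x\<bar>)) = (\<Sum>y\<in>?Y1. \<phi> (x - y))"
    by (rule sum.cong) (auto simp: nat_diff_distrib)
  also have "\<dots> = (\<Sum>a\<in>(\<lambda>y. x - y) ` ?Y1. \<phi> a)"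
    by (rule sum.reindex[symmetric, unfolded comp_def]) (auto intro: inj_onI)
  also have "\<dots> \<le> (\<Sum>a\<in>{1..U-1}. \<phi> a)"
    by (rule sum_mono2) (use x nn in auto)
  also have "(\<Sum>y\<in>?Y2. \<phi> (nat \<bar>int y - int x\<bar>)) = (\<Sum>y\<in>?Y2. \<phi> (y - x))"
    by (rule sum.cong) (auto simp: nat_diff_distrib)
  also have "\<dots> = (\<Sum>a\<in>(\<lambda>y. y - x) ` ?Y2. \<phi> a)"
    by (rule sum.reindex[symmetric, unfolded comp_def]) (auto intro: inj_onI)
  also have "\<dots> \<le> (\<Sum>a\<in>{1..U-1}. \<phi> a)"
  proof (rule sum_mono2)
    show "(\<lambda>y. y - x) ` ?Y2 \<subseteq> {1..U-1}"
    proof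
      fix a assume "a \<in> (\<lambda>y. y - x) ` ?Y2"
      then obtain y where yy: "y \<in> Y" "x < y" "a = y - x" by auto
      have "y < U" using yU yy by auto
      then show "a \<in> {1..U-1}" using yy by auto
    qed
  qed (use nn in auto)
  finally show ?thesis by simp
qed

definition Gq :: "nat \<Rightarrow> nat \<Rightarrow> real" where
  "Gq a b = real (gcd a b) / real (max a b)"

lemma Gq_nonneg: "Gq a b \<ge> 0" unfolding Gq_def by simp

lemma Gq_sum_bound:
  assumes Y: "Y \<subseteq> {..<U}" "x \<notin> Y" and x: "x < U"
  shows "(\<Sum>y\<in>Y. \<Sum>z\<in>Y. Gq (nat \<bar>int y - int x\<bar>) (nat \<bar>int z - int x\<bar>)) \<le> 8 * real U * (1 + ln (real U))"
proof -
  have "(\<Sum>y\<in>Y. \<Sum>z\<in>Y. Gq (nat \<bar>int y - int x\<bar>) (nat \<bar>int z - int x\<bar>))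
      \<le> (\<Sum>y\<in>Y. 2 * (\<Sum>b\<in>{1..U-1}. Gq (nat \<bar>int y - int x\<bar>) b))"
    by (rule sum_mono, rule two_to_one[OF Gq_nonneg Y x])
  also have "\<dots> = 2 * (\<Sum>y\<in>Y. (\<Sum>b\<in>{1..U-1}. Gq (nat \<bar>int y - int x\<bar>) b))"
    by (simp add: sum_distrib_left)
  also have "\<dots> \<le> 2 * (2 * (\<Sum>a\<in>{1..U-1}. \<Sum>b\<in>{1..U-1}. Gq a b))"
    by (rule mult_left_mono, rule two_to_one[OF _ Y x]) (auto intro: sum_nonneg Gq_nonneg)
  also have "(\<Sum>a\<in>{1..U-1}. \<Sum>b\<in>{1..U-1}. Gq a b) \<le> 2 * real (U-1) * harm (U-1)"
    unfolding Gq_def by (rule sum_gcd_max)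
  finally have a: "(\<Sum>y\<in>Y. \<Sum>z\<in>Y. Gq (nat \<bar>int y - int x\<bar>) (nat \<bar>int z - int x\<bar>)) \<le> 8 * real (U-1) * harm (U-1)"
    by simp
  show ?thesis
  proof (cases "U \<ge> 2")
    case True
    have h1: "harm (U-1) \<le> 1 + ln (real (U-1))" using True by (intro harm_le_ln) simp
    have h2: "ln (real (U-1)) \<le> ln (real U)" using True by simp
    have h: "harm (U-1) \<le> 1 + ln (real U)" using h1 h2 by linarith
    have "real (U-1) \<le> real U" by simp
    have "8 * real (U-1) * harm (U-1) \<le> 8 * real U * (1 + ln (real U))"
      by (rule mult_mono) (use h True in \<open>auto intro: harm_nonneg\<close>)
    then show ?thesis using a by linarith
  next
    case False
    then have "U - 1 = 0" by simp
    then have "8 * real (U-1) * harm (U-1) = 0" by simp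
    moreover have "0 \<le> 8 * real U * (1 + ln (real U))"
      using False x by (cases U) auto
    ultimately show ?thesis using a by linarith
  qed
qed

lemma final_arith:
  fixes P Mr K Ur n L :: real
  assumes P: "P > 4 * Ur^2" and M1: "1 \<le> Mr" and MU: "Mr \<le> Ur" and K1: "1 \<le> K" and KU: "K \<le> Ur"
    and U2: "2 \<le> Ur" and n: "n \<le> P/Mr + 1" and MP: "Mr < P" and L: "L \<ge> 1/2" and n0: "n \<ge> 0"
  shows "((n^2 + 4 * Ur * n + 2)/P + 1)/P + 8 * n * Ur * (1+L)/(P * K^2) \<le> 1/Mr^2 + 60 * (Ur * L)/(Mr * K^2)"
proof -
  have P0: "P > 0" using MP M1 by linarith
  have Ur0: "Ur > 0" using U2 by linarith
  have K0: "K > 0" using K1 by linarith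
  have M0: "Mr > 0" using M1 by linarith
  define e where "e = Ur/(Mr * K^2)"
  have e0: "e > 0" unfolding e_def using Ur0 M0 K0 by simp
  define q where "q = n/P"
  have q0: "q \<ge> 0" unfolding q_def using n0 P0 by simp
  have s1: "q \<le> 1/Mr + 1/P"
  proof -
    have "n/P \<le> (P/Mr+1)/P" using n P0 by (simp add: divide_right_mono)
    also have "\<dots> = 1/Mr + 1/P" using P0 by (simp add: field_simps)
    finally show ?thesis unfolding q_def .
  qed
  have s2: "1/P \<le> 1/Mr" using MP M0 by (simp add: frac_le)
  have q2: "q \<le> 2/Mr" using s1 s2 by simp
  have s3: "q^2 \<le> 1/Mr^2 + 2/(Mr * P) + 1/P^2"
  proof -
    have "q^2 \<le> (1/Mr + 1/P)^2" using s1 q0 by (simp add: power_mono)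
    also have "\<dots> = 1/Mr^2 + 2/(Mr * P) + 1/P^2" using M0 P0 by (simp add: power2_eq_square field_simps)
    finally show ?thesis .
  qed
  have LHS1: "((n^2 + 4 * Ur * n + 2)/P + 1)/P = q^2 + 4 * Ur * q/P + 2/P^2 + 1/P"
    unfolding q_def using P0 by (simp add: power2_eq_square field_simps)
  have s4: "4 * Ur * q/P \<le> 8 * Ur/(Mr * P)"
  proof -
    have "4 * Ur * q \<le> 4 * Ur * (2/Mr)" using q2 Ur0 by (intro mult_left_mono) auto
    then have "4 * Ur * q/P \<le> 4 * Ur * (2/Mr)/P" by (rule divide_right_mono) (use P0 in auto)
    then show ?thesis by simp
  qed
  have "Ur^2 \<ge> 2^2" by (rule power_mono[OF U2]) simp
  then have P1: "P \<ge> 1" using P by simp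
  have s5a: "2/(Mr * P) \<le> 2/P" using M1 P0 by (simp add: frac_le)
  have s5b: "1/P^2 \<le> 1/P" using P1 by (simp add: power2_eq_square frac_le)
  have s5c: "2/P^2 \<le> 2/P" using P1 by (simp add: power2_eq_square frac_le)
  have iu: "1/Ur^2 \<le> e"
  proof -
    have "Mr * K^2 \<le> Ur * Ur^2" using M1 MU K1 KU by (simp add: mult_mono power_mono)
    then have "1/(Ur * Ur^2) \<le> 1/(Mr * K^2)" using M0 K0 by (simp add: frac_le)
    then have m: "Ur * (1/(Ur * Ur^2)) \<le> Ur * (1/(Mr * K^2))" by (rule mult_left_mono) (use Ur0 in simp)
    have h1: "Ur * (1/(Ur * Ur^2)) = 1/Ur^2" using Ur0 by (simp add: power2_eq_square)
    have h2: "Ur * (1/(Mr * K^2)) = e" unfolding e_def by simp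
    show ?thesis using m h1 h2 by linarith
  qed
  have s6: "6/P \<le> (3/2) * e"
  proof -
    have "6/P \<le> 6/(4 * Ur^2)" by (rule divide_left_mono) (use P Ur0 P0 in auto)
    also have "\<dots> = (3/2) * (1/Ur^2)" by simp
    finally show ?thesis using iu by linarith
  qed
  have s7: "8 * Ur/(Mr * P) \<le> 2 * e"
  proof -
    have "8 * Ur/(Mr * P) \<le> 8 * Ur/(Mr * (4 * Ur^2))"
    proof (rule divide_left_mono)
      show "Mr * (4 * Ur^2) \<le> Mr * P" using P M0 by simp
      show "0 \<le> 8 * Ur" using Ur0 by simp
      show "0 < Mr * P * (Mr * (4 * Ur^2))" using P0 M0 Ur0 by simp
    qed
    also have "\<dots> = 2/(Mr * Ur)" using Ur0 by (simp add: power2_eq_square)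
    also have "2/(Mr * Ur) \<le> 2 * e"
    proof -
      have "K^2 \<le> Ur^2" using K1 KU by (simp add: power_mono)
      then have "Mr * K^2 \<le> Mr * Ur^2" using M0 by simp
      then have "1/(Mr * Ur^2) \<le> 1/(Mr * K^2)" using M0 K0 by (simp add: frac_le)
      then have m: "Ur * (1/(Mr * Ur^2)) \<le> Ur * (1/(Mr * K^2))" by (rule mult_left_mono) (use Ur0 in simp)
      have h1: "Ur * (1/(Mr * Ur^2)) = 1/(Mr * Ur)" using Ur0 by (simp add: power2_eq_square)
      have h2: "Ur * (1/(Mr * K^2)) = e" unfolding e_def by simp
      show ?thesis using m h1 h2 by linarith
    qed
    finally show ?thesis .
  qed
  have s8: "8 * n * Ur * (1+L)/(P * K^2) \<le> 16 * (1+L) * e"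
  proof -
    have "8 * n * Ur * (1+L)/(P * K^2) = 8 * q * (Ur * (1+L)/K^2)" unfolding q_def by simp
    also have "\<dots> \<le> 8 * (2/Mr) * (Ur * (1+L)/K^2)" using q2 Ur0 L K0 by (intro mult_right_mono mult_left_mono) auto
    also have "\<dots> = 16 * (1+L) * e" unfolding e_def by simp
    finally show ?thesis .
  qed
  have tot: "((n^2 + 4 * Ur * n + 2)/P + 1)/P + 8 * n * Ur * (1+L)/(P * K^2) \<le> 1/Mr^2 + (7/2 + 16 * (1+L)) * e"
    using LHS1 s3 s4 s5a s5b s5c s6 s7 s8 by (simp add: algebra_simps)
  have "(7/2 + 16 * (1+L)) * e \<le> (60 * L) * e" using L e0 by (intro mult_right_mono) auto
  moreover have "60 * (Ur * L)/(Mr * K^2) = (60 * L) * e" unfolding e_def by simp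
  ultimately show ?thesis using tot by linarith
qed

lemma nat_mod_eq_int: "(a::nat) mod p = b mod p \<Longrightarrow> int p dvd int a - int b"
  by (metis mod_eq_dvd_iff of_nat_mod)

lemma dvd_small_int: "(p::int) dvd d \<Longrightarrow> \<bar>d\<bar> < p \<Longrightarrow> d = 0"
proof (rule ccontr)
  assume a: "p dvd d" "\<bar>d\<bar> < p" "d \<noteq> 0"
  then have "\<bar>p\<bar> \<le> \<bar>d\<bar>" using dvd_imp_le_int by blast
  then show False using a by linarith
qed

lemma inj_key:
  fixes p x y \<sigma> \<sigma>' \<tau> \<tau>' :: nat
  assumes p: "prime p" and xy: "x \<noteq> y" "x < p" "y < p"
    and lt: "\<sigma> < p" "\<sigma>' < p" "\<tau> < p" "\<tau>' < p"
    and ex: "(\<sigma> * x+\<tau>) mod p = (\<sigma>'*x+\<tau>') mod p"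
    and ey: "(\<sigma> * y+\<tau>) mod p = (\<sigma>'*y+\<tau>') mod p"
  shows "\<sigma> = \<sigma>' \<and> \<tau> = \<tau>'"
proof -
  have pi: "prime (int p)" using p by simp
  have d1: "int p dvd (int \<sigma> * int x+int \<tau>) - (int \<sigma>'*int x+int \<tau>')" using nat_mod_eq_int[OF ex] by simp
  have d2: "int p dvd (int \<sigma> * int y+int \<tau>) - (int \<sigma>'*int y+int \<tau>')" using nat_mod_eq_int[OF ey] by simp
  have "int p dvd ((int \<sigma> * int x+int \<tau>) - (int \<sigma>'*int x+int \<tau>')) - ((int \<sigma> * int y+int \<tau>) - (int \<sigma>'*int y+int \<tau>'))"
    using d1 d2 by (rule dvd_diff)
  also have "((int \<sigma> * int x+int \<tau>) - (int \<sigma>'*int x+int \<tau>')) - ((int \<sigma> * int y+int \<tau>) - (int \<sigma>'*int y+int \<tau>'))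
      = (int \<sigma> - int \<sigma>') * (int x - int y)" by (simp add: algebra_simps)
  finally have "int p dvd (int \<sigma> - int \<sigma>') * (int x - int y)" .
  then have "int p dvd (int \<sigma> - int \<sigma>') \<or> int p dvd (int x - int y)" using pi by (simp add: prime_dvd_mult_iff)
  moreover have "\<not> int p dvd (int x - int y)"
  proof
    assume "int p dvd (int x - int y)"
    moreover have "\<bar>int x - int y\<bar> < int p" using xy by auto
    ultimately have "int x - int y = 0" by (rule dvd_small_int)
    then show False using xy by simp
  qed
  ultimately have "int p dvd (int \<sigma> - int \<sigma>')" by blast
  moreover have "\<bar>int \<sigma> - int \<sigma>'\<bar> < int p" using lt by auto
  ultimately have s: "\<sigma> = \<sigma>'" using dvd_small_int by fastforce
  then have "int p dvd int \<tau> - int \<tau>'" using d1 by simp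
  moreover have "\<bar>int \<tau> - int \<tau>'\<bar> < int p" using lt by auto
  ultimately have "\<tau> = \<tau>'" using dvd_small_int by fastforce
  then show ?thesis using s by simp
qed

definition tinv :: "nat \<Rightarrow> nat \<Rightarrow> nat \<Rightarrow> nat \<Rightarrow> nat" where
  "tinv p \<sigma> x u = (u + p - (\<sigma> * x) mod p) mod p"

lemma tinv_eq:
  assumes "p > 0" "u < p"
  shows "(\<sigma> * x + tinv p \<sigma> x u) mod p = u"
proof -
  have "(\<sigma> * x + tinv p \<sigma> x u) mod p = (\<sigma> * x + (u + p - (\<sigma> * x) mod p)) mod p"
    unfolding tinv_def by (simp add: mod_add_right_eq)
  also have "\<sigma> * x + (u + p - (\<sigma> * x) mod p) = (\<sigma> * x) div p * p + (u + p)"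
    using mod_less_divisor[OF assms(1), of "\<sigma> * x"] div_mult_mod_eq[of "\<sigma> * x" p] by linarith
  also have "\<dots> mod p = (u + p) mod p" by simp
  also have "\<dots> = u" using assms by simp
  finally show ?thesis .
qed

lemma den_lower:
  fixes p m x a :: nat and X :: "nat set"
  assumes p: "p > 0" and fX: "finite X"
  shows "p * card {u. u < p \<and> u mod m = a} * card X ^ 2 \<le>
    card {(\<sigma>, \<tau>, y, z). \<sigma> \<in> {..<p} \<and> \<tau> \<in> {..<p} \<and> y \<in> X \<and> z \<in> X \<and> hsh p m \<sigma> \<tau> x = a}"
proof -
  let ?A = "{u. u < p \<and> u mod m = a}"
  let ?D = "{(\<sigma>, \<tau>, y, z). \<sigma> \<in> {..<p} \<and> \<tau> \<in> {..<p} \<and> y \<in> X \<and> z \<in> X \<and> hsh p m \<sigma> \<tau> x = a}"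
  define F where "F = (\<lambda>((\<sigma>,u),(y::nat,z::nat)). (\<sigma>, tinv p \<sigma> x u, y, z))"
  have inj: "inj_on F (({..<p} \<times> ?A) \<times> (X \<times> X))"
  proof (rule inj_onI)
    fix e1 e2 assume e: "e1 \<in> ({..<p} \<times> ?A) \<times> (X \<times> X)" "e2 \<in> ({..<p} \<times> ?A) \<times> (X \<times> X)" "F e1 = F e2"
    obtain \<sigma>1 u1 y1 z1 where e1: "e1 = ((\<sigma>1,u1),(y1,z1))" by (metis prod.collapse)
    obtain \<sigma>2 u2 y2 z2 where e2: "e2 = ((\<sigma>2,u2),(y2,z2))" by (metis prod.collapse)
    have h: "\<sigma>1 = \<sigma>2" "tinv p \<sigma>1 x u1 = tinv p \<sigma>2 x u2" "y1 = y2" "z1 = z2" using e(3) unfolding e1 e2 F_def by auto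
    have "u1 = (\<sigma>1 * x + tinv p \<sigma>1 x u1) mod p" using tinv_eq[OF p] e(1) unfolding e1 by simp
    also have "\<dots> = (\<sigma>2 * x + tinv p \<sigma>2 x u2) mod p" using h by simp
    also have "\<dots> = u2" using tinv_eq[OF p] e(2) unfolding e2 by simp
    finally show "e1 = e2" using h e1 e2 by simp
  qed
  have img: "F ` (({..<p} \<times> ?A) \<times> (X \<times> X)) \<subseteq> ?D"
  proof
    fix e assume "e \<in> F ` (({..<p} \<times> ?A) \<times> (X \<times> X))"
    then obtain \<sigma> u y z where h: "\<sigma> < p" "u < p" "u mod m = a" "y \<in> X" "z \<in> X" "e = (\<sigma>, tinv p \<sigma> x u, y, z)"
      unfolding F_def by auto
    have "tinv p \<sigma> x u < p" unfolding tinv_def using p by simp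
    moreover have "hsh p m \<sigma> (tinv p \<sigma> x u) x = a" unfolding hsh_def using tinv_eq[OF p h(2)] h(3) by simp
    ultimately show "e \<in> ?D" using h by auto
  qed
  have finD: "finite ?D"
  proof (rule finite_subset)
    show "?D \<subseteq> {..<p} \<times> {..<p} \<times> X \<times> X" by auto
    show "finite ({..<p} \<times> {..<p} \<times> X \<times> X)" using fX by simp
  qed
  have "card (({..<p} \<times> ?A) \<times> (X \<times> X)) \<le> card ?D" by (rule card_inj_on_le[OF inj img finD])
  moreover have "card (({..<p} \<times> ?A) \<times> (X \<times> X)) = p * card ?A * card X ^ 2"
    by (simp add: card_cartesian_product power2_eq_square)
  ultimately show ?thesis by simp
qed

definition Tset :: "nat \<Rightarrow> nat \<Rightarrow> nat \<Rightarrow> nat \<Rightarrow> nat \<Rightarrow> nat \<Rightarrow> nat \<Rightarrow> (nat \<times> nat) set" where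
  "Tset p m x a b y z = {(\<sigma>,\<tau>). \<sigma> < p \<and> \<tau> < p \<and> hsh p m \<sigma> \<tau> x = a \<and> hsh p m \<sigma> \<tau> y = b \<and> hsh p m \<sigma> \<tau> z = b}"

lemma num_eq:
  assumes fX: "finite X"
  shows "card {(\<sigma>, \<tau>, y, z). \<sigma> \<in> {..<p} \<and> \<tau> \<in> {..<p} \<and> y \<in> X \<and> z \<in> X \<and>
                  hsh p m \<sigma> \<tau> x = a \<and> hsh p m \<sigma> \<tau> y = b \<and> hsh p m \<sigma> \<tau> z = b}
       = (\<Sum>(y,z)\<in>X \<times> X. card (Tset p m x a b y z))"
proof -
  let ?S = "{(\<sigma>, \<tau>, y, z). \<sigma> \<in> {..<p} \<and> \<tau> \<in> {..<p} \<and> y \<in> X \<and> z \<in> X \<and>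
                  hsh p m \<sigma> \<tau> x = a \<and> hsh p m \<sigma> \<tau> y = b \<and> hsh p m \<sigma> \<tau> z = b}"
  define g where "g = (\<lambda>(\<sigma>::nat, \<tau>::nat, y::nat, z::nat). (y,z))"
  have finS: "finite ?S"
  proof (rule finite_subset)
    show "?S \<subseteq> {..<p} \<times> {..<p} \<times> X \<times> X" by auto
    show "finite ({..<p} \<times> {..<p} \<times> X \<times> X)" using fX by simp
  qed
  have gS: "g ` ?S \<subseteq> X \<times> X" unfolding g_def by auto
  have "card ?S = (\<Sum>yz\<in>X \<times> X. card {e \<in> ?S. g e = yz})"
    using sum.group[OF finS _ gS, of "\<lambda>_. 1::nat"] fX by simp
  also have "\<dots> = (\<Sum>(y,z)\<in>X \<times> X. card (Tset p m x a b y z))"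
  proof (rule sum.cong[OF refl])
    fix yz assume yz: "yz \<in> X \<times> X"
    obtain y z where e: "yz = (y,z)" by (cases yz)
    have "{e \<in> ?S. g e = yz} = (\<lambda>(\<sigma>,\<tau>). (\<sigma>,\<tau>,y,z)) ` Tset p m x a b y z"
      using yz unfolding e g_def Tset_def by auto
    moreover have "inj_on (\<lambda>(\<sigma>,\<tau>). (\<sigma>::nat,\<tau>::nat,y,z)) (Tset p m x a b y z)" by (rule inj_onI) auto
    ultimately show "card {e \<in> ?S. g e = yz} = (case yz of (y,z) \<Rightarrow> card (Tset p m x a b y z))"
      unfolding e by (simp add: card_image)
  qed
  finally show ?thesis .
qed

lemma div_lt_Nn: "(v::nat) < p \<Longrightarrow> v div m < p div m + 1"
  by (simp add: div_le_mono le_imp_less_Suc)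

lemma pair_same:
  assumes p: "prime p" and xy: "x \<noteq> y" "x < p" "y < p"
  shows "card (Tset p m x a b y y) \<le> card {u. u < p \<and> u mod m = a} * (p div m + 1)"
proof -
  let ?A = "{u. u < p \<and> u mod m = a}"
  define F where "F = (\<lambda>(\<sigma>,\<tau>). ((\<sigma> * x+\<tau>) mod p, ((\<sigma> * y+\<tau>) mod p) div m))"
  have p0: "p > 0" using p prime_gt_0_nat by blast
  have inj: "inj_on F (Tset p m x a b y y)"
  proof (rule inj_onI)
    fix e1 e2 assume e: "e1 \<in> Tset p m x a b y y" "e2 \<in> Tset p m x a b y y" "F e1 = F e2"
    obtain \<sigma>1 \<tau>1 where e1: "e1 = (\<sigma>1,\<tau>1)" by (cases e1)
    obtain \<sigma>2 \<tau>2 where e2: "e2 = (\<sigma>2,\<tau>2)" by (cases e2)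
    have h1: "(\<sigma>1 * x+\<tau>1) mod p = (\<sigma>2 * x+\<tau>2) mod p" "((\<sigma>1 * y+\<tau>1) mod p) div m = ((\<sigma>2 * y+\<tau>2) mod p) div m"
      using e(3) unfolding F_def e1 e2 by auto
    have h2: "((\<sigma>1 * y+\<tau>1) mod p) mod m = ((\<sigma>2 * y+\<tau>2) mod p) mod m" using e(1,2) unfolding e1 e2 Tset_def hsh_def by auto
    have h3: "(\<sigma>1 * y+\<tau>1) mod p = (\<sigma>2 * y+\<tau>2) mod p" using h1(2) h2 by (metis div_mult_mod_eq)
    have "\<sigma>1 = \<sigma>2 \<and> \<tau>1 = \<tau>2" using e(1,2) unfolding e1 e2 Tset_def
      by (intro inj_key[OF p xy _ _ _ _ h1(1) h3]) auto
    then show "e1 = e2" unfolding e1 e2 by simp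
  qed
  have img: "F ` Tset p m x a b y y \<subseteq> ?A \<times> {..<p div m + 1}"
  proof
    fix e assume "e \<in> F ` Tset p m x a b y y"
    then obtain \<sigma> \<tau> where h: "(\<sigma>,\<tau>) \<in> Tset p m x a b y y" "e = F (\<sigma>,\<tau>)" by auto
    have "(\<sigma> * y+\<tau>) mod p < p" using p0 by simp
    then show "e \<in> ?A \<times> {..<p div m + 1}" using h p0 div_lt_Nn unfolding F_def Tset_def hsh_def by auto
  qed
  have "card (Tset p m x a b y y) \<le> card (?A \<times> {..<p div m + 1})"
    by (rule card_inj_on_le[OF inj img]) simp
  then show ?thesis by (simp add: card_cartesian_product)
qed

lemma modcond:
  fixes P V W u \<sigma> \<tau> X Y Z d1 d2 g r s b m v w minv :: int
  assumes dV: "P dvd V - (\<sigma> * Y+\<tau>)" and dW: "P dvd W - (\<sigma> * Z+\<tau>)" and du: "P dvd u - (\<sigma> * X+\<tau>)"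
    and d1: "d1 = Y - X" and d2: "d2 = Z - X" and g: "g = gcd d1 d2" and pr: "prime P" and ng: "\<not> P dvd g"
    and s: "s = d1 div g" and r: "r = d2 div g"
    and V: "V = b + m* v" and W: "W = b + m * w" and mi: "P dvd minv * m - 1"
  shows "P dvd (r* v - s * w) - minv * (r - s) * (u - b)"
proof -
  have e1: "P dvd (V - u) - \<sigma> * d1"
  proof -
    have eq: "(V - u) - \<sigma> * d1 = (V - (\<sigma> * Y+\<tau>)) - (u - (\<sigma> * X+\<tau>))" unfolding d1 by (simp add: algebra_simps)
    show ?thesis unfolding eq by (rule dvd_diff[OF dV du])
  qed
  have e2: "P dvd (W - u) - \<sigma> * d2"
  proof -
    have eq: "(W - u) - \<sigma> * d2 = (W - (\<sigma> * Z+\<tau>)) - (u - (\<sigma> * X+\<tau>))" unfolding d2 by (simp add: algebra_simps)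
    show ?thesis unfolding eq by (rule dvd_diff[OF dW du])
  qed
  have gs: "g * s = d1" unfolding s g by simp
  have gr: "g * r = d2" unfolding r g by simp
  define E where "E = r * (V-u) - s * (W-u)"
  have "g * E = d2 * ((V - u) - \<sigma> * d1) - d1 * ((W - u) - \<sigma> * d2)"
    unfolding E_def gs[symmetric] gr[symmetric] by (simp add: algebra_simps)
  moreover have "P dvd d2 * ((V - u) - \<sigma> * d1) - d1 * ((W - u) - \<sigma> * d2)"
    using e1 e2 by (simp add: dvd_diff)
  ultimately have "P dvd g * E" by simp
  then have PE: "P dvd E" using pr ng by (simp add: prime_dvd_mult_iff)
  have "(r* v - s * w) - minv * (r - s) * (u - b) = minv * E - (minv * m - 1) * (r* v - s * w)"
    unfolding E_def V W by (simp add: algebra_simps)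
  moreover have "P dvd minv * E - (minv * m - 1) * (r* v - s * w)" using PE mi by (simp add: dvd_diff)
  ultimately show ?thesis by simp
qed

lemma pair_diff:
  fixes p m x y z a b :: nat
  assumes p: "prime p" and m: "0 < m" "m < p"
    and dist: "x \<noteq> y" "x \<noteq> z" "y \<noteq> z" and lt: "x < p" "y < p" "z < p"
    and d1: "d1 = int y - int x" and d2: "d2 = int z - int x"
    and s: "s = d1 div gcd d1 d2" and r: "r = d2 div gcd d1 d2"
    and Nn: "Nn = int (p div m + 1)"
  shows "real (card (Tset p m x a b y z)) \<le> real (card {u. u < p \<and> u mod m = a}) *
     ((real_of_int (Nn * Nn) + 2 * (real_of_int ((\<bar>r\<bar>+\<bar>s\<bar>) * (Nn-1)) + 1)) / of_int (int p)
            + real_of_int (Nn-1) / of_int (max \<bar>r\<bar> \<bar>s\<bar>) + 1)"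
proof -
  let ?A = "{u. u < p \<and> u mod m = a}"
  let ?Q = "(real_of_int (Nn * Nn) + 2 * (real_of_int ((\<bar>r\<bar>+\<bar>s\<bar>) * (Nn-1)) + 1)) / of_int (int p)
            + real_of_int (Nn-1) / of_int (max \<bar>r\<bar> \<bar>s\<bar>) + 1"
  have p0: "p > 0" using p prime_gt_0_nat by blast
  have pi: "prime (int p)" using p by simp
  have "\<not> p dvd m" using m by (auto dest: dvd_imp_le)
  then have "\<not> int p dvd int m" by simp
  then have "coprime (int p) (int m)" by (rule prime_imp_coprime[OF pi])
  then obtain mu mv where "mu * int m + mv * int p = 1" using bezout_int[of "int m" "int p"]
    by (auto simp: coprime_iff_gcd_eq_1 gcd.commute)
  then have mi: "int p dvd mu * int m - 1" by (metis add_diff_cancel_left' dvd_triv_right add.commute minus_diff_eq dvd_minus_iff)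
  define g where "g = gcd d1 d2"
  have d1nz: "d1 \<noteq> 0" using dist d1 by simp
  have d2nz: "d2 \<noteq> 0" using dist d2 by simp
  have gpos: "g > 0" unfolding g_def using d1nz by simp
  have gle: "g \<le> \<bar>d1\<bar>" unfolding g_def using dvd_imp_le_int[OF d1nz gcd_dvd1[of d1 d2]] by simp
  have ng: "\<not> int p dvd g"
  proof
    assume "int p dvd g"
    moreover have "\<bar>g\<bar> < int p" using gle gpos d1 lt by auto
    ultimately have "g = 0" by (rule dvd_small_int)
    then show False using gpos by simp
  qed
  have snz: "s \<noteq> 0" unfolding s using d1nz
    by (metis dvd_div_mult_self gcd_dvd1 mult_eq_0_iff)
  have rnz: "r \<noteq> 0" unfolding r using d2nz
    by (metis dvd_div_mult_self gcd_dvd2 mult_eq_0_iff)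
  have cop: "coprime r s" unfolding r s using div_gcd_coprime[of d2 d1] d1nz by (simp add: gcd.commute)
  define K where "K u = mu * (r - s) * (int u - int b)" for u :: nat
  define Box where "Box u = {(v,w). v \<in> {0..Nn-1} \<and> w \<in> {0..Nn-1} \<and> (r* v - s * w) mod int p = K u mod int p}" for u
  define F where "F = (\<lambda>(\<sigma>,\<tau>). ((\<sigma> * x+\<tau>) mod p, (int (((\<sigma> * y+\<tau>) mod p) div m), int (((\<sigma> * z+\<tau>) mod p) div m))))"
  have inj: "inj_on F (Tset p m x a b y z)"
  proof (rule inj_onI)
    fix e1 e2 assume e: "e1 \<in> Tset p m x a b y z" "e2 \<in> Tset p m x a b y z" "F e1 = F e2"
    obtain \<sigma>1 \<tau>1 where e1: "e1 = (\<sigma>1,\<tau>1)" by (cases e1)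
    obtain \<sigma>2 \<tau>2 where e2: "e2 = (\<sigma>2,\<tau>2)" by (cases e2)
    have h1: "(\<sigma>1 * x+\<tau>1) mod p = (\<sigma>2 * x+\<tau>2) mod p" "((\<sigma>1 * y+\<tau>1) mod p) div m = ((\<sigma>2 * y+\<tau>2) mod p) div m"
      using e(3) unfolding F_def e1 e2 by auto
    have h2: "((\<sigma>1 * y+\<tau>1) mod p) mod m = ((\<sigma>2 * y+\<tau>2) mod p) mod m" using e(1,2) unfolding e1 e2 Tset_def hsh_def by auto
    have h3: "(\<sigma>1 * y+\<tau>1) mod p = (\<sigma>2 * y+\<tau>2) mod p" using h1(2) h2 by (metis div_mult_mod_eq)
    have "\<sigma>1 = \<sigma>2 \<and> \<tau>1 = \<tau>2" using e(1,2) unfolding e1 e2 Tset_def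
      by (intro inj_key[OF p dist(1) lt(1,2) _ _ _ _ h1(1) h3]) auto
    then show "e1 = e2" unfolding e1 e2 by simp
  qed
  have img: "F ` Tset p m x a b y z \<subseteq> Sigma ?A Box"
  proof
    fix e assume "e \<in> F ` Tset p m x a b y z"
    then obtain \<sigma> \<tau> where h: "(\<sigma>,\<tau>) \<in> Tset p m x a b y z" "e = F (\<sigma>,\<tau>)" by auto
    define u where "u = (\<sigma> * x+\<tau>) mod p"
    define V where "V = (\<sigma> * y+\<tau>) mod p"
    define W where "W = (\<sigma> * z+\<tau>) mod p"
    have hm: "u mod m = a" "V mod m = b" "W mod m = b" using h(1) unfolding Tset_def hsh_def u_def V_def W_def by auto
    have ub: "u < p" "V < p" "W < p" unfolding u_def V_def W_def using p0 by auto
    have ev: "e = (u, (int (V div m), int (W div m)))" using h(2) unfolding F_def u_def V_def W_def by simp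
    have Vdm: "int V = int b + int m * int (V div m)" using hm(2) div_mult_mod_eq[of V m]
      by (metis add.commute mult.commute of_nat_add of_nat_mult)
    have Wdm: "int W = int b + int m * int (W div m)" using hm(3) div_mult_mod_eq[of W m]
      by (metis add.commute mult.commute of_nat_add of_nat_mult)
    have dV: "int p dvd int V - (int \<sigma> * int y + int \<tau>)"
      unfolding V_def by (metis mod_mod_trivial nat_mod_eq_int of_nat_add of_nat_mult)
    have dW: "int p dvd int W - (int \<sigma> * int z + int \<tau>)"
      unfolding W_def by (metis mod_mod_trivial nat_mod_eq_int of_nat_add of_nat_mult)
    have du: "int p dvd int u - (int \<sigma> * int x + int \<tau>)"
      unfolding u_def by (metis mod_mod_trivial nat_mod_eq_int of_nat_add of_nat_mult)
    have "int p dvd (r * int (V div m) - s * int (W div m)) - mu * (r - s) * (int u - int b)"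
      by (rule modcond[OF dV dW du d1 d2 refl pi _ s r Vdm Wdm mi]) (use ng in \<open>simp add: g_def\<close>)
    then have "(r * int (V div m) - s * int (W div m)) mod int p = K u mod int p"
      unfolding K_def by (simp add: mod_eq_dvd_iff)
    moreover have "int (V div m) \<in> {0..Nn-1}" "int (W div m) \<in> {0..Nn-1}"
      using div_lt_Nn[OF ub(2), of m] div_lt_Nn[OF ub(3), of m] unfolding Nn by auto
    ultimately have "(int (V div m), int (W div m)) \<in> Box u" unfolding Box_def by simp
    moreover have "u \<in> ?A" using ub hm by simp
    ultimately show "e \<in> Sigma ?A Box" unfolding ev by simp
  qed
  have finA: "finite ?A" by simp
  have finB: "\<forall>u\<in>?A. finite (Box u)"
    unfolding Box_def by (auto intro: finite_subset[where B="{0..Nn-1} \<times> {0..Nn-1}"])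
  have "card (Tset p m x a b y z) \<le> card (Sigma ?A Box)"
    by (rule card_inj_on_le[OF inj img]) (use finA finB in \<open>blast intro: finite_SigmaI\<close>)
  also have "\<dots> = (\<Sum>u\<in>?A. card (Box u))" using finA finB by simp
  also have "\<dots> = (\<Sum>u\<in>?A. cnt r s Nn (int p) (K u))" unfolding Box_def cnt_def by simp
  finally have c1: "real (card (Tset p m x a b y z)) \<le> (\<Sum>u\<in>?A. real (cnt r s Nn (int p) (K u)))"
    by (metis of_nat_le_iff of_nat_sum)
  have Nn1: "Nn \<ge> 1" unfolding Nn by simp
  have "(\<Sum>u\<in>?A. real (cnt r s Nn (int p) (K u))) \<le> (\<Sum>u\<in>?A. ?Q)"
    by (rule sum_mono) (rule cnt_gen[OF rnz snz cop _ Nn1], use p0 in simp)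
  also have "\<dots> = real (card ?A) * ?Q" by simp
  finally show ?thesis using c1 by linarith
qed

lemma aux_lin: fixes A B X C :: real shows "A = B \<Longrightarrow> 2 * X \<le> C \<Longrightarrow> A + 2 * (X+1) \<le> B + C + 2"
  by (simp add: algebra_simps)

lemma Gq_rs:
  fixes d1 d2 :: int
  assumes d1: "d1 \<noteq> 0" and d2: "d2 \<noteq> 0"
  shows "Gq (nat \<bar>d1\<bar>) (nat \<bar>d2\<bar>) = 1 / real_of_int (max \<bar>d2 div gcd d1 d2\<bar> \<bar>d1 div gcd d1 d2\<bar>)"
proof -
  define g where "g = gcd d1 d2"
  have gpos: "g > 0" unfolding g_def using d1 by simp
  have q1: "g * (d1 div g) = d1" unfolding g_def by simp
  have q2: "g * (d2 div g) = d2" unfolding g_def by simp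
  have e1: "\<bar>d1\<bar> = g * \<bar>d1 div g\<bar>" using q1 gpos by (metis abs_mult abs_of_pos)
  have e2: "\<bar>d2\<bar> = g * \<bar>d2 div g\<bar>" using q2 gpos by (metis abs_mult abs_of_pos)
  have gi: "real (gcd (nat \<bar>d1\<bar>) (nat \<bar>d2\<bar>)) = real_of_int g"
    unfolding g_def gcd_int_def by simp
  have mx: "real (max (nat \<bar>d1\<bar>) (nat \<bar>d2\<bar>)) = real_of_int g * real_of_int (max \<bar>d2 div g\<bar> \<bar>d1 div g\<bar>)"
  proof -
    have "max (nat \<bar>d1\<bar>) (nat \<bar>d2\<bar>) = nat (max \<bar>d1\<bar> \<bar>d2\<bar>)" by (simp add: max_def nat_le_eq_zle)
    moreover have "0 \<le> max \<bar>d1\<bar> \<bar>d2\<bar>" by simp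
    ultimately have "real (max (nat \<bar>d1\<bar>) (nat \<bar>d2\<bar>)) = real_of_int (max \<bar>d1\<bar> \<bar>d2\<bar>)"
      by (simp only: of_nat_nat)
    also have "max \<bar>d1\<bar> \<bar>d2\<bar> = g * max \<bar>d2 div g\<bar> \<bar>d1 div g\<bar>"
      using gpos by (subst e1, subst e2) (simp add: max_def)
    finally show ?thesis by simp
  qed
  show ?thesis unfolding Gq_def gi mx g_def[symmetric] using gpos by simp
qed

lemma pair_bound:
  fixes p m x y z a b U :: nat
  assumes p: "prime p" and m: "0 < m" "m < p" and pU: "4 * U^2 < p"
    and xy: "x \<noteq> y" "x \<noteq> z" and lt: "x < U" "y < U" "z < U"
  shows "real (card (Tset p m x a b y z)) \<le> real (card {u. u < p \<and> u mod m = a}) *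
     ((real (p div m + 1)^2 + 4 * real U * real (p div m + 1) + 2) / real p + 1
      + real (p div m + 1) * Gq (nat \<bar>int y - int x\<bar>) (nat \<bar>int z - int x\<bar>))"
proof -
  let ?Na = "real (card {u. u < p \<and> u mod m = a})"
  let ?n = "real (p div m + 1)"
  let ?c0 = "(?n^2 + 4 * real U * ?n + 2) / real p + 1"
  have "U \<le> 4 * U^2"
  proof (cases "U = 0")
    case False
    then have "U * 1 \<le> U * (4 * U)" by (intro mult_le_mono2) simp
    then show ?thesis by (simp add: power2_eq_square mult.assoc mult.left_commute)
  qed simp
  then have Up: "U < p" using pU by linarith
  have ltp: "x < p" "y < p" "z < p" using lt Up by auto
  have p0: "real p > 0" using p prime_gt_0_nat by simp
  have c0: "?c0 \<ge> 0" using p0 by simp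
  have Na0: "?Na \<ge> 0" by simp
  show ?thesis
  proof (cases "y = z")
    case True
    have "card (Tset p m x a b y y) \<le> card {u. u < p \<and> u mod m = a} * (p div m + 1)"
      by (rule pair_same[OF p xy(1) ltp(1,2)])
    then have c: "real (card (Tset p m x a b y z)) \<le> ?Na * ?n" unfolding True
      by (metis of_nat_le_iff of_nat_mult)
    have "nat \<bar>int y - int x\<bar> > 0" using xy by simp
    then have G1: "Gq (nat \<bar>int y - int x\<bar>) (nat \<bar>int z - int x\<bar>) = 1" unfolding True Gq_def by simp
    have "?Na * ?n \<le> ?Na * (?c0 + ?n * 1)" using Na0 c0 by (simp add: mult_left_mono)
    then show ?thesis using c G1 by simp
  next
    case False
    define d1 where "d1 = int y - int x"
    define d2 where "d2 = int z - int x"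
    define s where "s = d1 div gcd d1 d2"
    define r where "r = d2 div gcd d1 d2"
    define Nn where "Nn = int (p div m + 1)"
    have d1nz: "d1 \<noteq> 0" and d2nz: "d2 \<noteq> 0" using xy unfolding d1_def d2_def by auto
    have pd: "real (card (Tset p m x a b y z)) \<le> ?Na *
     ((real_of_int (Nn * Nn) + 2 * (real_of_int ((\<bar>r\<bar>+\<bar>s\<bar>) * (Nn-1)) + 1)) / of_int (int p)
            + real_of_int (Nn-1) / of_int (max \<bar>r\<bar> \<bar>s\<bar>) + 1)"
      by (rule pair_diff[OF p m xy False ltp d1_def d2_def s_def r_def Nn_def])
    have "gcd d1 d2 > 0" using d1nz by simp
    then have g1: "gcd d1 d2 \<ge> 1" by linarith
    have rle: "\<bar>r\<bar> \<le> \<bar>d2\<bar>"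
    proof -
      have "gcd d1 d2 * r = d2" unfolding r_def by simp
      then have "\<bar>d2\<bar> = gcd d1 d2 * \<bar>r\<bar>" using g1 by (metis abs_mult abs_of_nonneg zero_le_one order_trans)
      moreover have "1 * \<bar>r\<bar> \<le> gcd d1 d2 * \<bar>r\<bar>" by (rule mult_right_mono[OF g1]) simp
      ultimately show ?thesis by simp
    qed
    have sle: "\<bar>s\<bar> \<le> \<bar>d1\<bar>"
    proof -
      have "gcd d1 d2 * s = d1" unfolding s_def by simp
      then have "\<bar>d1\<bar> = gcd d1 d2 * \<bar>s\<bar>" using g1 by (metis abs_mult abs_of_nonneg zero_le_one order_trans)
      moreover have "1 * \<bar>s\<bar> \<le> gcd d1 d2 * \<bar>s\<bar>" by (rule mult_right_mono[OF g1]) simp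
      ultimately show ?thesis by simp
    qed
    have d1U: "\<bar>d1\<bar> \<le> int U" and d2U: "\<bar>d2\<bar> \<le> int U" using lt unfolding d1_def d2_def by auto
    have rsU: "\<bar>r\<bar> + \<bar>s\<bar> \<le> 2 * int U" using rle sle d1U d2U by linarith
    have Nn1: "Nn - 1 \<ge> 0" unfolding Nn_def by simp
    have "(\<bar>r\<bar>+\<bar>s\<bar>) * (Nn-1) \<le> (2 * int U) * Nn"
      using rsU Nn1 by (intro mult_mono) auto
    then have "real_of_int ((\<bar>r\<bar>+\<bar>s\<bar>) * (Nn-1)) \<le> real_of_int ((2 * int U) * Nn)"
      by (simp only: of_int_le_iff)
    also have "real_of_int ((2 * int U) * Nn) = 2 * real U * ?n" unfolding Nn_def by simp
    finally have t1: "real_of_int ((\<bar>r\<bar>+\<bar>s\<bar>) * (Nn-1)) \<le> 2 * real U * ?n" .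
    have t0: "real_of_int (Nn * Nn) = ?n^2" unfolding Nn_def by (simp add: power2_eq_square)
    have tfrac: "(real_of_int (Nn * Nn) + 2 * (real_of_int ((\<bar>r\<bar>+\<bar>s\<bar>) * (Nn-1)) + 1)) / of_int (int p)
        \<le> (?n^2 + 4 * real U * ?n + 2) / real p"
    proof -
      have num: "real_of_int (Nn * Nn) + 2 * (real_of_int ((\<bar>r\<bar>+\<bar>s\<bar>) * (Nn-1)) + 1) \<le> ?n^2 + 4 * real U * ?n + 2"
      proof -
        have t1': "2 * real_of_int ((\<bar>r\<bar>+\<bar>s\<bar>) * (Nn-1)) \<le> 4 * real U * ?n"
          using mult_left_mono[OF t1, of 2] by simp
        show ?thesis by (rule aux_lin[OF t0 t1'])
      qed
      have "(real_of_int (Nn * Nn) + 2 * (real_of_int ((\<bar>r\<bar>+\<bar>s\<bar>) * (Nn-1)) + 1)) / real p \<le> (?n^2 + 4 * real U * ?n + 2) / real p"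
        by (rule divide_right_mono[OF num]) simp
      then show ?thesis by simp
    qed
    have Gq: "Gq (nat \<bar>int y - int x\<bar>) (nat \<bar>int z - int x\<bar>) = 1 / real_of_int (max \<bar>r\<bar> \<bar>s\<bar>)"
      using Gq_rs[OF d1nz d2nz] unfolding r_def s_def d1_def d2_def by simp
    have "gcd d1 d2 * r = d2" unfolding r_def by simp
    then have "r \<noteq> 0" using d2nz by auto
    then have Mpos: "real_of_int (max \<bar>r\<bar> \<bar>s\<bar>) > 0" by simp
    have t2: "real_of_int (Nn-1) / of_int (max \<bar>r\<bar> \<bar>s\<bar>) \<le> ?n * Gq (nat \<bar>int y - int x\<bar>) (nat \<bar>int z - int x\<bar>)"
      unfolding Gq using Mpos unfolding Nn_def by (simp add: divide_right_mono)
    have "((real_of_int (Nn * Nn) + 2 * (real_of_int ((\<bar>r\<bar>+\<bar>s\<bar>) * (Nn-1)) + 1)) / of_int (int p)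
            + real_of_int (Nn-1) / of_int (max \<bar>r\<bar> \<bar>s\<bar>) + 1) \<le> ?c0 + ?n * Gq (nat \<bar>int y - int x\<bar>) (nat \<bar>int z - int x\<bar>)"
      using tfrac t2 by linarith
    then have "?Na * ((real_of_int (Nn * Nn) + 2 * (real_of_int ((\<bar>r\<bar>+\<bar>s\<bar>) * (Nn-1)) + 1)) / of_int (int p)
            + real_of_int (Nn-1) / of_int (max \<bar>r\<bar> \<bar>s\<bar>) + 1) \<le> ?Na * (?c0 + ?n * Gq (nat \<bar>int y - int x\<bar>) (nat \<bar>int z - int x\<bar>))"
      using Na0 by (rule mult_left_mono)
    then show ?thesis using pd by linarith
  qed
qed

lemma main_bound:
  fixes U p m x a b :: nat and X :: "nat set"
  assumes XU: "X \<subseteq> {..<U}" and Xne: "X \<noteq> {}" and p: "prime p" and pU: "p > 4 * U^2"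
    and m0: "0 < m" and mU: "m \<le> U" and xU: "x \<in> {..<U}" and xX: "x \<notin> X" and am: "a < m" and bm: "b < m"
  shows "cond_prob_hash p m X x a b
       \<le> 1 / real m ^ 2 + 60 * (real U * ln (real U)) / (real m * real (card X) ^ 2)"
proof -
  have fX: "finite X" using XU finite_subset by blast
  define k where "k = card X"
  have k1: "k \<ge> 1" unfolding k_def using fX Xne by (simp add: Suc_le_eq card_gt_0_iff)
  have kU: "k \<le> U" unfolding k_def using card_mono[OF _ XU] by simp
  obtain y0 where y0: "y0 \<in> X" using Xne by blast
  have y0U: "y0 < U" using y0 XU by auto
  have x0U: "x < U" using xU by simp
  have "y0 \<noteq> x" using y0 xX by auto
  then have U2: "U \<ge> 2" using y0U x0U by linarith
  have "U \<le> 4 * U^2"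
  proof (cases "U = 0")
    case False
    then have "U * 1 \<le> U * (4 * U)" by (intro mult_le_mono2) simp
    then show ?thesis by (simp add: power2_eq_square mult.assoc mult.left_commute)
  qed simp
  then have Up: "U < p" using pU by linarith
  have mp: "m < p" using mU Up by linarith
  have p0: "p > 0" using p prime_gt_0_nat by blast
  let ?A = "{u. u < p \<and> u mod m = a}"
  define Na where "Na = card ?A"
  have Na1: "Na \<ge> 1"
  proof -
    have "a \<in> ?A" using am mp by simp
    then have "card ?A > 0" by (auto simp: card_gt_0_iff)
    then show ?thesis unfolding Na_def by simp
  qed
  define n0 where "n0 = p div m + 1"
  define c0 where "c0 = (real n0^2 + 4 * real U * real n0 + 2) / real p + 1"
  define L where "L = ln (real U)"
  let ?Gs = "\<lambda>y z. Gq (nat \<bar>int y - int x\<bar>) (nat \<bar>int z - int x\<bar>)"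
  let ?NumS = "{(\<sigma>, \<tau>, y, z). \<sigma> \<in> {..<p} \<and> \<tau> \<in> {..<p} \<and> y \<in> X \<and> z \<in> X \<and>
                  hsh p m \<sigma> \<tau> x = a \<and> hsh p m \<sigma> \<tau> y = b \<and> hsh p m \<sigma> \<tau> z = b}"
  let ?DenS = "{(\<sigma>, \<tau>, y, z). \<sigma> \<in> {..<p} \<and> \<tau> \<in> {..<p} \<and> y \<in> X \<and> z \<in> X \<and>
                  hsh p m \<sigma> \<tau> x = a}"
  have num: "real (card ?NumS) = (\<Sum>y\<in>X. \<Sum>z\<in>X. real (card (Tset p m x a b y z)))"
  proof -
    have "card ?NumS = (\<Sum>y\<in>X. \<Sum>z\<in>X. card (Tset p m x a b y z))"
      using num_eq[OF fX, of p m x a b] by (simp add: sum.cartesian_product)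
    then show ?thesis by (simp add: of_nat_sum)
  qed
  have pb: "real (card (Tset p m x a b y z)) \<le> real Na * (c0 + real n0 * ?Gs y z)" if "y \<in> X" "z \<in> X" for y z
    unfolding Na_def c0_def n0_def
    by (rule pair_bound[OF p m0 mp _ _ _ _ _ ]) (use that xX XU xU pU in auto)
  have "real (card ?NumS) \<le> (\<Sum>y\<in>X. \<Sum>z\<in>X. real Na * (c0 + real n0 * ?Gs y z))"
    unfolding num by (intro sum_mono pb)
  also have "\<dots> = real Na * (real k ^ 2 * c0 + real n0 * (\<Sum>y\<in>X. \<Sum>z\<in>X. ?Gs y z))"
    unfolding k_def by (simp add: sum.distrib sum_distrib_left power2_eq_square algebra_simps)
  also have "\<dots> \<le> real Na * (real k ^ 2 * c0 + real n0 * (8 * real U * (1 + L)))"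
  proof -
    have "(\<Sum>y\<in>X. \<Sum>z\<in>X. ?Gs y z) \<le> 8 * real U * (1 + L)"
      unfolding L_def by (rule Gq_sum_bound[OF XU xX]) (use xU in simp)
    then show ?thesis by (intro mult_left_mono add_left_mono) auto
  qed
  finally have numb: "real (card ?NumS) \<le> real Na * (real k ^ 2 * c0 + real n0 * (8 * real U * (1 + L)))" .
  have denb: "real p * real Na * real k ^ 2 \<le> real (card ?DenS)"
  proof -
    have "p * Na * k ^ 2 \<le> card ?DenS" using den_lower[OF p0 fX, of m a x] unfolding Na_def k_def .
    then have "real (p * Na * k ^ 2) \<le> real (card ?DenS)" by (simp only: of_nat_le_iff)
    then show ?thesis by simp
  qed
  have dpos: "real p * real Na * real k ^ 2 > 0" using p0 Na1 k1 by simp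
  have "cond_prob_hash p m X x a b = real (card ?NumS) / real (card ?DenS)"
    unfolding cond_prob_hash_def by simp
  also have "\<dots> \<le> real (card ?NumS) / (real p * real Na * real k ^ 2)"
  proof (rule divide_left_mono[OF denb])
    show "0 \<le> real (card ?NumS)" by simp
    have "real (card ?DenS) > 0" using denb dpos by linarith
    then show "0 < real (card ?DenS) * (real p * real Na * real k ^ 2)" using dpos by simp
  qed
  also have "\<dots> \<le> real Na * (real k ^ 2 * c0 + real n0 * (8 * real U * (1 + L))) / (real p * real Na * real k ^ 2)"
    by (rule divide_right_mono[OF numb]) (use dpos in simp)
  also have "\<dots> = c0 / real p + 8 * real n0 * real U * (1 + L) / (real p * real k ^ 2)"
    using dpos Na1 k1 p0 by (simp add: field_simps)
  also have "\<dots> = ((real n0^2 + 4 * real U * real n0 + 2) / real p + 1) / real p + 8 * real n0 * real U * (1 + L) / (real p * real k ^ 2)"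
    unfolding c0_def by simp
  also have "\<dots> \<le> 1 / real m ^ 2 + 60 * (real U * L) / (real m * real k ^ 2)"
  proof (rule final_arith)
    have "real (4 * U^2) < real p" using pU by (simp only: of_nat_less_iff)
    then show "real p > 4 * (real U)^2" by simp
    show "1 \<le> real m" "real m \<le> real U" "1 \<le> real k" "real k \<le> real U" "2 \<le> real U"
      using m0 mU k1 kU U2 by auto
    show "real n0 \<le> real p / real m + 1" unfolding n0_def using of_nat_div_le_of_nat[of p m] by simp
    show "real m < real p" using mp by simp
    show "1/2 \<le> L"
    proof -
      have "ln (1 / real U) \<le> 1 / real U - 1" using U2 by (intro ln_le_minus_one) simp
      moreover have "ln (1 / real U) = - L" unfolding L_def using U2 by (simp add: ln_div)
      moreover have "1 / real U \<le> 1/2" using U2 by simp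
      ultimately show ?thesis by linarith
    qed
    show "0 \<le> real n0" by simp
  qed
  finally show ?thesis unfolding L_def k_def .
qed

theorem theorem11p2:
  shows "\<exists>C::real. \<forall>(U::nat) (X::nat set) (p::nat) (m::nat) (x::nat) (a::nat) (b::nat).
     X \<subseteq> {..<U} \<and> X \<noteq> {} \<and> prime p \<and> p > 4 * U^2 \<and> 0 < m \<and> m \<le> U \<and>
     x \<in> {..<U} \<and> x \<notin> X \<and> a < m \<and> b < m \<longrightarrow>
     cond_prob_hash p m X x a b
       \<le> 1 / real m ^ 2 + C * (real U * ln (real U)) / (real m * real (card X) ^ 2)"
proof (intro exI[of _ 60] allI impI)
  fix U X p m x a b :: nat
  fix X :: "nat set"
  assume h: "X \<subseteq> {..<U} \<and> X \<noteq> {} \<and> prime p \<and> p > 4 * U^2 \<and> 0 < m \<and> m \<le> U \<and>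
     x \<in> {..<U} \<and> x \<notin> X \<and> a < m \<and> b < m"
  show "cond_prob_hash p m X x a b
       \<le> 1 / real m ^ 2 + 60 * (real U * ln (real U)) / (real m * real (card X) ^ 2)"
    using h by (intro main_bound) auto
qed

end
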